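(* Let $\mathcal H$ be a family of graphs. The following are equivalent: (i) there is a constant $c=c(\mathcal H)$ such that every (not necessarily connected) $\mathcal H$-free graph $G$ has fewer than $c$ vertices $v$ with $\mathrm{sdeg}(v)\ge 2$; (ii) there is a positive integer $n$ such that $\mathcal H\le \{K_n^*,\ nP_3,\ K_{1,n}^*\}$.
   Context: All graphs are finite, simple, undirected. For graphs $H_1,H_2$, write $H_1\prec H_2$ if $H_2$ contains an induced subgraph isomorphic to $H_1$. A graph $G$ is $\mathcal H$-free if no $H\in\mathcal H$ satisfies $H\prec G$. For families $\mathcal H_1,\mathcal H_2$, write $\mathcal H_1\le\mathcal H_2$ if for every $H_2\in\mathcal H_2$ there is $H_1\in\mathcal H_1$ with $H_1\prec H_2$. For a vertex $v$ of $G$, the sharp degree is $\mathrm{sdeg}(v)=c(G-v)-c(G)+1$, where $c(\cdot)$ is the number of connected components. $P_3$ is the path on $3$ vertices; $nG$ is the disjoint union of $n$ copies of $G$. $K_{1,n}^*$ is obtained from the star $K_{1,n}$ by attaching a new pendant vertex to each leaf; $K_n^*$ is obtained from $K_n$ by attaching a new pendant vertex to each vertex. *)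

theory Defs
  imports Main
begin

type_synonym 'a graph = "'a set \<times> 'a set set"

definition verts :: "'a graph \<Rightarrow> 'a set" where "verts G = fst G"
definition edges :: "'a graph \<Rightarrow> 'a set set" where "edges G = snd G"

definition wf_graph :: "'a graph \<Rightarrow> bool" where
  "wf_graph G \<longleftrightarrow> finite (verts G) \<and>
     (\<forall>e\<in>edges G. \<exists>u v. u \<noteq> v \<and> e = {u, v} \<and> u \<in> verts G \<and> v \<in> verts G)"

definition induced_sub :: "'a graph \<Rightarrow> 'b graph \<Rightarrow> bool" (infix "\<prec>" 50) where
  "H \<prec> G \<longleftrightarrow> (\<exists>f. inj_on f (verts H) \<and> f ` verts H \<subseteq> verts G \<and>
     (\<forall>u\<in>verts H. \<forall>v\<in>verts H. {u, v} \<in> edges H \<longleftrightarrow> {f u, f v} \<in> edges G))"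

definition H_free :: "'a graph set \<Rightarrow> 'b graph \<Rightarrow> bool" where
  "H_free \<H> G \<longleftrightarrow> (\<forall>H\<in>\<H>. \<not> H \<prec> G)"

definition family_le :: "'a graph set \<Rightarrow> 'b graph set \<Rightarrow> bool" where
  "family_le \<H>1 \<H>2 \<longleftrightarrow> (\<forall>H2\<in>\<H>2. \<exists>H1\<in>\<H>1. H1 \<prec> H2)"

definition adj :: "'a graph \<Rightarrow> 'a \<Rightarrow> 'a \<Rightarrow> bool" where
  "adj G u v \<longleftrightarrow> {u, v} \<in> edges G"

definition components :: "'a graph \<Rightarrow> 'a set set" where
  "components G = (\<lambda>v. {w \<in> verts G. (adj G)\<^sup>*\<^sup>* v w}) ` verts G"

definition num_components :: "'a graph \<Rightarrow> nat" where
  "num_components G = card (components G)"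

definition delete_vertex :: "'a graph \<Rightarrow> 'a \<Rightarrow> 'a graph" where
  "delete_vertex G v = (verts G - {v}, {e \<in> edges G. v \<notin> e})"

definition sdeg :: "'a graph \<Rightarrow> 'a \<Rightarrow> int" where
  "sdeg G v = int (num_components (delete_vertex G v)) - int (num_components G) + 1"

text \<open>K_n^*: clique on 0..n-1, vertex n+i pendant at i.\<close>
definition Kn_star :: "nat \<Rightarrow> nat graph" where
  "Kn_star n = ({0..<2*n},
     {{i, j} | i j. i < n \<and> j < n \<and> i \<noteq> j} \<union> {{i, n + i} | i. i < n})"

definition nP3 :: "nat \<Rightarrow> nat graph" where
  "nP3 n = ({0..<3*n},
     {{3*i, 3*i+1} | i. i < n} \<union> {{3*i+1, 3*i+2} | i. i < n})"

text \<open>K_{1,n}^*: centre 0, leaves 1..n, vertex n+i pendant at leaf i.\<close>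
definition K1n_star :: "nat \<Rightarrow> nat graph" where
  "K1n_star n = ({0..2*n},
     {{0, i} | i. 1 \<le> i \<and> i \<le> n} \<union> {{i, n + i} | i. 1 \<le> i \<and> i \<le> n})"

end

theory Submission
  imports Defs "HOL-Library.Ramsey"
begin

lemma adj_sym: "adj G u v = adj G v u" by (simp add: adj_def insert_commute)

lemma rtranclp_sym:
  assumes "\<And>x y. R x y \<Longrightarrow> R y x" "R\<^sup>*\<^sup>* x y" shows "R\<^sup>*\<^sup>* y x"
  using assms(2)
proof (induction rule: rtranclp_induct)
  case base then show ?case by simp
next
  case (step y z) then show ?case
    by (meson assms(1) converse_rtranclp_into_rtranclp)
qed

lemma adj_del: "adj (delete_vertex G s) u v \<longleftrightarrow> adj G u v \<and> u \<noteq> s \<and> v \<noteq> s"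
  by (auto simp: adj_def delete_vertex_def edges_def)

lemma verts_del: "verts (delete_vertex G s) = verts G - {s}"
  by (simp add: delete_vertex_def verts_def)

lemma avoid_ne: "(adj (delete_vertex G s))\<^sup>*\<^sup>* a b \<Longrightarrow> a \<noteq> s \<Longrightarrow> b \<noteq> s"
  by (induction rule: rtranclp_induct) (auto simp: adj_del)

lemma decomp:
  assumes "(adj G)\<^sup>*\<^sup>* x y" "x \<noteq> s"
  shows "(adj (delete_vertex G s))\<^sup>*\<^sup>* x y \<or> y = s \<or>
    (\<exists>z. (adj G)\<^sup>*\<^sup>* x s \<and> adj G s z \<and> z \<noteq> s \<and> (adj (delete_vertex G s))\<^sup>*\<^sup>* z y)"
  using assms(1)
proof (induction rule: rtranclp_induct)
  case base then show ?case by simp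
next
  case (step u y)
  from step.IH show ?case
  proof (elim disjE exE conjE)
    assume h: "(adj (delete_vertex G s))\<^sup>*\<^sup>* x u"
    then have "u \<noteq> s" using avoid_ne assms(2) by metis
    then show ?thesis using h step.hyps(2)
      by (metis adj_del rtranclp.rtrancl_into_rtrancl)
  next
    assume "u = s"
    then show ?thesis using step.hyps by (metis rtranclp.rtrancl_refl)
  next
    fix z assume h: "(adj G)\<^sup>*\<^sup>* x s" "adj G s z" "z \<noteq> s" "(adj (delete_vertex G s))\<^sup>*\<^sup>* z u"
    then have "u \<noteq> s" using avoid_ne by metis
    then show ?thesis using h step.hyps(2)
      by (metis adj_del rtranclp.rtrancl_into_rtrancl)
  qed
qed

lemma card_factor:
  assumes "\<forall>u\<in>A. \<forall>v\<in>A. g u = g v \<longrightarrow> f u = f v"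
  shows "f ` A = (\<lambda>z. f (inv_into A g z)) ` (g ` A)"
proof -
  have fu: "f (inv_into A g (g u)) = f u" if "u \<in> A" for u
  proof -
    have "inv_into A g (g u) \<in> A" using that by (simp add: inv_into_into)
    moreover have "g (inv_into A g (g u)) = g u" using that by (simp add: f_inv_into_f)
    ultimately show ?thesis using assms that by blast
  qed
  show ?thesis
  proof
    show "f ` A \<subseteq> (\<lambda>z. f (inv_into A g z)) ` g ` A"
    proof
      fix y assume "y \<in> f ` A"
      then obtain u where "u \<in> A" "y = f u" by blast
      then show "y \<in> (\<lambda>z. f (inv_into A g z)) ` g ` A" using fu[of u] by force
    qed
    show "(\<lambda>z. f (inv_into A g z)) ` g ` A \<subseteq> f ` A"
      using fu by force
  qed
qed
lemma card_factor_le: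
  assumes "finite A" "\<forall>u\<in>A. \<forall>v\<in>A. g u = g v \<longrightarrow> f u = f v"
  shows "card (f ` A) \<le> card (g ` A)"
proof -
  have "card ((\<lambda>z. f (inv_into A g z)) ` (g ` A)) \<le> card (g ` A)"
    by (rule card_image_le) (use assms(1) in simp)
  then show ?thesis using card_factor[OF assms(2)] by simp
qed

lemma card_factor_less:
  assumes "finite A" "\<forall>u\<in>A. \<forall>v\<in>A. g u = g v \<longrightarrow> f u = f v"
    and "x \<in> A" "y \<in> A" "f x = f y" "g x \<noteq> g y"
  shows "card (f ` A) < card (g ` A)"
proof -
  let ?h = "\<lambda>z. f (inv_into A g z)"
  have e: "f ` A = ?h ` (g ` A)" by (rule card_factor[OF assms(2)])
  have hu: "?h (g u) = f u" if "u \<in> A" for u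
  proof -
    have "inv_into A g (g u) \<in> A" using that by (simp add: inv_into_into)
    moreover have "g (inv_into A g (g u)) = g u" using that by (simp add: f_inv_into_f)
    ultimately show ?thesis using assms(2) that by blast
  qed
  have "\<not> inj_on ?h (g ` A)"
  proof
    assume "inj_on ?h (g ` A)"
    moreover have "?h (g x) = ?h (g y)" using hu assms(3,4,5) by simp
    ultimately have "g x = g y" using assms(3,4) unfolding inj_on_def by blast
    then show False using assms(6) by simp
  qed
  then have "card (?h ` (g ` A)) \<noteq> card (g ` A)"
    using inj_on_iff_eq_card[of "g ` A" ?h] assms(1) by auto
  moreover have "card (?h ` (g ` A)) \<le> card (g ` A)" by (rule card_image_le) (use assms(1) in simp)
  ultimately show ?thesis using e by simp
qed

definition cls :: "'b graph \<Rightarrow> 'b \<Rightarrow> 'b set" where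
  "cls H v = {w \<in> verts H. (adj H)\<^sup>*\<^sup>* v w}"

lemma components_cls: "components H = cls H ` verts H"
  by (simp add: components_def cls_def)

locale wfg = fixes G :: "'a graph" assumes wf: "wf_graph G"
begin

lemma finV: "finite (verts G)" using wf by (simp add: wf_graph_def)

lemma adjD: "adj G u v \<Longrightarrow> u \<in> verts G \<and> v \<in> verts G \<and> u \<noteq> v"
  using wf unfolding wf_graph_def adj_def by (auto simp: doubleton_eq_iff)

lemma adj_irrefl: "\<not> adj G u u" using adjD by blast

abbreviation conn where "conn \<equiv> (adj G)\<^sup>*\<^sup>*"
abbreviation connS where "connS s \<equiv> (adj (delete_vertex G s))\<^sup>*\<^sup>*"

lemma conn_sym: "conn x y \<Longrightarrow> conn y x"
  by (rule rtranclp_sym[where R="adj G"]) (auto simp: adj_sym)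

lemma connS_sym: "connS s x y \<Longrightarrow> connS s y x"
  by (rule rtranclp_sym) (auto simp: adj_sym)

lemma conn_verts: "conn x y \<Longrightarrow> x \<in> verts G \<Longrightarrow> y \<in> verts G"
  by (induction rule: rtranclp_induct) (auto dest: adjD)


lemma connS_conn: "connS s x y \<Longrightarrow> conn x y"
  by (induction rule: rtranclp_induct) (auto simp: adj_del)

lemma cls_eq_conn: "u \<in> verts G \<Longrightarrow> v \<in> verts G \<Longrightarrow> cls G u = cls G v \<Longrightarrow> conn u v"
  unfolding cls_def by blast

lemma cls_conn_eq: "conn u v \<Longrightarrow> cls G u = cls G v"
  unfolding cls_def
proof (intro Collect_cong conj_cong refl iffI)
  fix w assume "conn u v" "conn u w" then show "conn v w"
    using conn_sym rtranclp_trans by metis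
next
  fix w assume "conn u v" "conn v w" then show "conn u w"
    using rtranclp_trans by metis
qed

lemma clsS_conn_eq: "connS s u v \<Longrightarrow> cls (delete_vertex G s) u = cls (delete_vertex G s) v"
  unfolding cls_def
proof (intro Collect_cong conj_cong refl iffI)
  fix w assume "connS s u v" "connS s u w" then show "connS s v w"
    using connS_sym rtranclp_trans by metis
next
  fix w assume "connS s u v" "connS s v w" then show "connS s u w"
    using rtranclp_trans by metis
qed

lemma clsS_eq_conn: "u \<in> verts G - {s} \<Longrightarrow> v \<in> verts G - {s} \<Longrightarrow>
   cls (delete_vertex G s) u = cls (delete_vertex G s) v \<Longrightarrow> connS s u v"
  unfolding cls_def verts_del by blast

lemma split_of_sdeg:
  assumes "sdeg G s \<ge> 2"
  shows "\<exists>x y. x \<in> verts G - {s} \<and> y \<in> verts G - {s} \<and> conn x y \<and> \<not> connS s x y"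
proof (rule ccontr)
  assume "\<not> ?thesis"
  then have h: "\<forall>x\<in>verts G - {s}. \<forall>y\<in>verts G - {s}. conn x y \<longrightarrow> connS s x y" by blast
  have "card (cls (delete_vertex G s) ` (verts G - {s})) \<le> card (cls G ` (verts G - {s}))"
  proof (rule card_factor_le)
    show "finite (verts G - {s})" using finV by simp
    show "\<forall>u\<in>verts G - {s}. \<forall>v\<in>verts G - {s}. cls G u = cls G v \<longrightarrow> cls (delete_vertex G s) u = cls (delete_vertex G s) v"
      using h cls_eq_conn clsS_conn_eq by (meson DiffD1)
  qed
  also have "\<dots> \<le> card (cls G ` verts G)"
    by (rule card_mono) (use finV in auto)
  finally have "num_components (delete_vertex G s) \<le> num_components G"
    by (simp add: num_components_def components_cls verts_del)
  then show False using assms by (simp add: sdeg_def)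
qed

lemma sdeg_of_split:
  assumes "x \<in> verts G - {s}" "y \<in> verts G - {s}" "conn x y" "\<not> connS s x y"
  shows "sdeg G s \<ge> 2"
proof -
  have "conn x s" using decomp[OF assms(3)] assms by auto
  then have cs: "cls G s = cls G x" using cls_conn_eq conn_sym by metis
  have s: "s \<in> verts G" using \<open>conn x s\<close> conn_verts assms(1) by blast
  have "cls G ` verts G = cls G ` (verts G - {s})"
    using cs assms(1) s by blast
  moreover have "card (cls G ` (verts G - {s})) < card (cls (delete_vertex G s) ` (verts G - {s}))"
  proof (rule card_factor_less[where x=x and y=y])
    show "finite (verts G - {s})" using finV by simp
    show "\<forall>u\<in>verts G - {s}. \<forall>v\<in>verts G - {s}. cls (delete_vertex G s) u = cls (delete_vertex G s) v \<longrightarrow> cls G u = cls G v"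
      using clsS_eq_conn connS_conn cls_conn_eq by meson
    show "cls G x = cls G y" using assms(3) cls_conn_eq by blast
    show "cls (delete_vertex G s) x \<noteq> cls (delete_vertex G s) y"
      using clsS_eq_conn assms(1,2,4) by blast
  qed (use assms in auto)
  ultimately have "num_components G < num_components (delete_vertex G s)"
    by (simp add: num_components_def components_cls verts_del)
  then show ?thesis by (simp add: sdeg_def)
qed

end

context wfg
begin

lemma nP3_edge: "{u, v} \<in> edges (nP3 n) \<longleftrightarrow>
  (\<exists>i<n. (u = 3*i \<and> v = 3*i+1) \<or> (u = 3*i+1 \<and> v = 3*i) \<or> (u = 3*i+1 \<and> v = 3*i+2) \<or> (u = 3*i+2 \<and> v = 3*i+1))"
  unfolding nP3_def edges_def by (auto simp: doubleton_eq_iff)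

lemma nP3_verts: "verts (nP3 n) = {0..<3*n}" by (simp add: nP3_def verts_def)

lemma lin3: "k < 3 \<Longrightarrow> e < 3 \<Longrightarrow> 3*i+k = 3*j+(e::nat) \<longleftrightarrow> i = j \<and> k = e"
  by presburger

lemma lin3b: "k < 3 \<Longrightarrow> 3*i+k = 3*j \<Longrightarrow> i = j \<and> k = (0::nat)"
  "k < 3 \<Longrightarrow> 3*i+k = 3*j+1 \<Longrightarrow> i = j \<and> k = (1::nat)"
  "k < 3 \<Longrightarrow> 3*i+k = 3*j+2 \<Longrightarrow> i = j \<and> k = (2::nat)"
  by presburger+

lemma nP3_edge3:
  assumes "k < 3" "l < 3"
  shows "{3*i+k, 3*j+l} \<in> edges (nP3 n) \<longleftrightarrow> i = j \<and> i < n \<and> ({k,l} = {0,1} \<or> {k,l} = {1,2})"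
proof
  assume "{3*i+k, 3*j+l} \<in> edges (nP3 n)"
  then obtain i' where i': "i' < n" and
    D: "(3*i+k = 3*i' \<and> 3*j+l = 3*i'+1) \<or> (3*i+k = 3*i'+1 \<and> 3*j+l = 3*i') \<or>
        (3*i+k = 3*i'+1 \<and> 3*j+l = 3*i'+2) \<or> (3*i+k = 3*i'+2 \<and> 3*j+l = 3*i'+1)"
    unfolding nP3_edge by blast
  from D show "i = j \<and> i < n \<and> ({k,l} = {0,1} \<or> {k,l} = {1,2})"
  proof (elim disjE conjE)
    assume "3*i+k = 3*i'" "3*j+l = 3*i'+1"
    with lin3b[OF assms(1)] lin3b[OF assms(2)] have "i = i'" "k = 0" "j = i'" "l = 1" by blast+
    then show ?thesis using i' by auto
  next
    assume "3*i+k = 3*i'+1" "3*j+l = 3*i'"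
    with lin3b[OF assms(1)] lin3b[OF assms(2)] have "i = i'" "k = 1" "j = i'" "l = 0" by blast+
    then show ?thesis using i' by auto
  next
    assume "3*i+k = 3*i'+1" "3*j+l = 3*i'+2"
    with lin3b[OF assms(1)] lin3b[OF assms(2)] have "i = i'" "k = 1" "j = i'" "l = 2" by blast+
    then show ?thesis using i' by auto
  next
    assume "3*i+k = 3*i'+2" "3*j+l = 3*i'+1"
    with lin3b[OF assms(1)] lin3b[OF assms(2)] have "i = i'" "k = 2" "j = i'" "l = 1" by blast+
    then show ?thesis using i' by auto
  qed
next
  assume h: "i = j \<and> i < n \<and> ({k,l} = {0,1} \<or> {k,l} = {1,2})"
  then have "(k = 0 \<and> l = 1) \<or> (k = 1 \<and> l = 0) \<or> (k = 1 \<and> l = 2) \<or> (k = 2 \<and> l = 1)"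
    by (auto simp: doubleton_eq_iff)
  then show "{3*i+k, 3*j+l} \<in> edges (nP3 n)" unfolding nP3_edge using h
    by (elim disjE) (rule exI[of _ i]; simp)+
qed

end

context wfg
begin

lemma emb_nP3:
  fixes a b c :: "nat \<Rightarrow> 'a"
  assumes T: "\<And>i. i<n \<Longrightarrow> adj G (a i) (b i) \<and> adj G (b i) (c i) \<and> \<not> adj G (a i) (c i) \<and> a i \<noteq> c i"
    and X: "\<And>i j x y. i<n \<Longrightarrow> j<n \<Longrightarrow> i\<noteq>j \<Longrightarrow> x \<in> {a i, b i, c i} \<Longrightarrow> y \<in> {a j, b j, c j} \<Longrightarrow> x \<noteq> y \<and> \<not> adj G x y"
  shows "nP3 n \<prec> G"
proof -
  define g where "g i k = (if k = 0 then a i else if k = 1 then b i else c i)" for i k :: nat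
  define f where "f v = g (v div 3) (v mod 3)" for v
  have f3: "f (3*i+k) = g i k" if "k < 3" for i k using that by (simp add: f_def)
  have dec: "\<exists>i k. i < n \<and> k < 3 \<and> v = 3*i+k" if "v < 3*n" for v
    using that by (intro exI[of _ "v div 3"] exI[of _ "v mod 3"]) auto
  have gin: "g i k \<in> {a i, b i, c i}" for i k by (simp add: g_def)
  have inner: "g i k \<noteq> g i l \<and> (adj G (g i k) (g i l) \<longleftrightarrow> {k,l} = {0,1} \<or> {k,l} = {1,2})"
    if "i < n" "k < 3" "l < 3" "k \<noteq> l" for i k l
  proof -
    have "k = 0 \<or> k = 1 \<or> k = 2" "l = 0 \<or> l = 1 \<or> l = 2" using that by auto
    then show ?thesis using T[OF that(1)] that(4) adjD[of "a i" "b i"] adjD[of "b i" "c i"]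
      by (auto simp: g_def adj_sym doubleton_eq_iff)
  qed
  have main: "(g i k \<noteq> g j l) \<and> ({3*i+k, 3*j+l} \<in> edges (nP3 n) \<longleftrightarrow> adj G (g i k) (g j l))"
    if "i < n" "k < 3" "j < n" "l < 3" "(i,k) \<noteq> (j,l)" for i k j l
  proof (cases "i = j")
    case True
    then have kl: "k \<noteq> l" using that by auto
    have "{3*i+k, 3*j+l} \<in> edges (nP3 n) \<longleftrightarrow> {k,l} = {0,1} \<or> {k,l} = {1,2}"
      using nP3_edge3 True that by auto
    then show ?thesis using inner[OF that(1,2,4) kl] True by simp
  next
    case False
    have "\<not> {3*i+k, 3*j+l} \<in> edges (nP3 n)"
      using nP3_edge3 False that by auto
    then show ?thesis using X[OF that(1,3) False gin gin] by simp
  qed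
  show ?thesis unfolding induced_sub_def
  proof (intro exI[of _ f] conjI ballI)
    show "inj_on f (verts (nP3 n))"
    proof (rule inj_onI)
      fix u v assume "u \<in> verts (nP3 n)" "v \<in> verts (nP3 n)" "f u = f v"
      then obtain i k j l where "i < n" "k < 3" "u = 3*i+k" "j < n" "l < 3" "v = 3*j+l"
        using dec by (auto simp: nP3_verts) metis
      then show "u = v" using main[of i k j l] f3 \<open>f u = f v\<close> by fastforce
    qed
    show "f ` verts (nP3 n) \<subseteq> verts G"
    proof
      fix x assume "x \<in> f ` verts (nP3 n)"
      then obtain i k where "i < n" "k < 3" "x = g i k"
        using dec f3 by (auto simp: nP3_verts) metis
      then show "x \<in> verts G" using T[of i] adjD unfolding g_def by (auto split: if_splits)
    qed
    fix u v assume "u \<in> verts (nP3 n)" "v \<in> verts (nP3 n)"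
    then obtain i k j l where "i < n" "k < 3" "u = 3*i+k" "j < n" "l < 3" "v = 3*j+l"
      using dec by (auto simp: nP3_verts) metis
    then show "{u, v} \<in> edges (nP3 n) \<longleftrightarrow> {f u, f v} \<in> edges G"
      using main[of i k j l] f3 adj_irrefl nP3_edge3[of l l j j n]
      by (cases "(i,k) = (j,l)") (auto simp: adj_def)
  qed
qed

end

context wfg
begin

lemma Kn_edge: "u < 2*n \<Longrightarrow> v < 2*n \<Longrightarrow> {u, v} \<in> edges (Kn_star n) \<longleftrightarrow>
  (u < n \<and> v < n \<and> u \<noteq> v) \<or> (u < n \<and> v = n + u) \<or> (v < n \<and> u = n + v)"
  unfolding Kn_star_def edges_def by (auto simp: doubleton_eq_iff)

lemma K1n_edge: "u \<le> 2*n \<Longrightarrow> v \<le> 2*n \<Longrightarrow> {u, v} \<in> edges (K1n_star n) \<longleftrightarrow>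
  (u = 0 \<and> 1 \<le> v \<and> v \<le> n) \<or> (v = 0 \<and> 1 \<le> u \<and> u \<le> n) \<or> (1 \<le> u \<and> u \<le> n \<and> v = n + u) \<or> (1 \<le> v \<and> v \<le> n \<and> u = n + v)"
  unfolding K1n_star_def edges_def by (auto simp: doubleton_eq_iff)

end

context wfg
begin

lemma emb_Kn:
  fixes a p :: "nat \<Rightarrow> 'a"
  assumes A1: "\<And>i j. i<n \<Longrightarrow> j<n \<Longrightarrow> i\<noteq>j \<Longrightarrow> a i \<noteq> a j \<and> adj G (a i) (a j)"
    and A2: "\<And>i j. i<n \<Longrightarrow> j<n \<Longrightarrow> adj G (p i) (a j) \<longleftrightarrow> i = j"
    and A3: "\<And>i j. i<n \<Longrightarrow> j<n \<Longrightarrow> i\<noteq>j \<Longrightarrow> p i \<noteq> p j \<and> \<not> adj G (p i) (p j)"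
    and A4: "\<And>i j. i<n \<Longrightarrow> j<n \<Longrightarrow> p i \<noteq> a j"
  shows "Kn_star n \<prec> G"
proof -
  define f where "f u = (if u < n then a u else p (u - n))" for u
  have V: "verts (Kn_star n) = {0..<2*n}" by (simp add: Kn_star_def verts_def)
  have inj: "u = v" if u: "u < 2*n" and v: "v < 2*n" and e: "f u = f v" for u v
  proof (cases "u < n")
    case True
    show ?thesis
    proof (cases "v < n")
      case True
      then show ?thesis using \<open>u < n\<close> e A1[of u v] by (auto simp: f_def)
    next
      case False
      then have "v - n < n" using v by linarith
      then show ?thesis using \<open>u < n\<close> False e A4[of "v-n" u] by (simp add: f_def)
    qed
  next
    case False
    then have un: "u - n < n" using u by linarith
    show ?thesis
    proof (cases "v < n")
      case True
      then show ?thesis using un False e A4[of "u-n" v] by (simp add: f_def)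
    next
      case F2: False
      then have vn: "v - n < n" using v by linarith
      have "p (u - n) = p (v - n)" using e False F2 by (simp add: f_def)
      then have "u - n = v - n" using A3[OF un vn] by blast
      then show ?thesis using False F2 by linarith
    qed
  qed
  have inV: "f u \<in> verts G" if u: "u < 2*n" for u
  proof (cases "u < n")
    case True then show ?thesis using A2[of u u] adjD by (simp add: f_def)
  next
    case False then have "u - n < n" using u by linarith
    then show ?thesis using False A2[of "u-n" "u-n"] adjD by (simp add: f_def)
  qed
  have edge: "adj (Kn_star n) u v \<longleftrightarrow> adj G (f u) (f v)" if u: "u < 2*n" and v: "v < 2*n" for u v
  proof (cases "u < n")
    case True
    show ?thesis
    proof (cases "v < n")
      case True
      have "adj (Kn_star n) u v \<longleftrightarrow> u \<noteq> v" using \<open>u < n\<close> True u v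
        unfolding adj_def Kn_edge[OF u v] by linarith
      moreover have "adj G (f u) (f v) \<longleftrightarrow> u \<noteq> v" using \<open>u < n\<close> True A1[of u v] adj_irrefl[of "a u"]
        by (auto simp: f_def)
      ultimately show ?thesis by simp
    next
      case False
      then have vn: "v - n < n" using v by linarith
      have "adj (Kn_star n) u v \<longleftrightarrow> v - n = u" using \<open>u < n\<close> False u v
        unfolding adj_def Kn_edge[OF u v] by linarith
      moreover have "adj G (f u) (f v) \<longleftrightarrow> v - n = u" using \<open>u < n\<close> False A2[OF vn \<open>u < n\<close>]
        by (simp add: f_def adj_sym)
      ultimately show ?thesis by simp
    qed
  next
    case False
    then have un: "u - n < n" using u by linarith
    show ?thesis
    proof (cases "v < n")
      case True
      have "adj (Kn_star n) u v \<longleftrightarrow> u - n = v" using \<open>v < n\<close> False u v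
        unfolding adj_def Kn_edge[OF u v] by linarith
      moreover have "adj G (f u) (f v) \<longleftrightarrow> u - n = v" using \<open>v < n\<close> False A2[OF un \<open>v < n\<close>]
        by (simp add: f_def)
      ultimately show ?thesis by simp
    next
      case F2: False
      then have vn: "v - n < n" using v by linarith
      have "\<not> adj (Kn_star n) u v" using F2 False u v
        unfolding adj_def Kn_edge[OF u v] by linarith
      moreover have "\<not> adj G (f u) (f v)" using False F2 A3[OF un vn] adj_irrefl
        by (cases "u - n = v - n") (auto simp: f_def)
      ultimately show ?thesis by simp
    qed
  qed
  show ?thesis unfolding induced_sub_def
  proof (intro exI[of _ f] conjI ballI)
    show "inj_on f (verts (Kn_star n))" using inj by (auto simp: V inj_on_def)
    show "f ` verts (Kn_star n) \<subseteq> verts G" using inV by (auto simp: V)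
    fix u v assume "u \<in> verts (Kn_star n)" "v \<in> verts (Kn_star n)"
    then show "{u, v} \<in> edges (Kn_star n) \<longleftrightarrow> {f u, f v} \<in> edges G"
      using edge unfolding adj_def by (auto simp: V)
  qed
qed

end

context wfg
begin

lemma emb_K1n:
  fixes c :: 'a and a p :: "nat \<Rightarrow> 'a"
  assumes B0: "c \<in> verts G"
    and B1: "\<And>i. 1 \<le> i \<Longrightarrow> i \<le> n \<Longrightarrow> adj G c (a i) \<and> \<not> adj G c (p i) \<and> c \<noteq> p i"
    and B2: "\<And>i j. 1 \<le> i \<Longrightarrow> i \<le> n \<Longrightarrow> 1 \<le> j \<Longrightarrow> j \<le> n \<Longrightarrow> i \<noteq> j \<Longrightarrow>
       a i \<noteq> a j \<and> \<not> adj G (a i) (a j) \<and> p i \<noteq> p j \<and> \<not> adj G (p i) (p j)"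
    and B3: "\<And>i j. 1 \<le> i \<Longrightarrow> i \<le> n \<Longrightarrow> 1 \<le> j \<Longrightarrow> j \<le> n \<Longrightarrow> adj G (a i) (p j) \<longleftrightarrow> i = j"
    and B4: "\<And>i j. 1 \<le> i \<Longrightarrow> i \<le> n \<Longrightarrow> 1 \<le> j \<Longrightarrow> j \<le> n \<Longrightarrow> a i \<noteq> p j"
  shows "K1n_star n \<prec> G"
proof -
  define f where "f u = (if u = 0 then c else if u \<le> n then a u else p (u - n))" for u
  have V: "verts (K1n_star n) = {0..2*n}" by (simp add: K1n_star_def verts_def)
  have ca: "c \<noteq> a i" if "1 \<le> i" "i \<le> n" for i using B1[OF that] adjD by blast
  have kinds: "u = 0 \<or> (1 \<le> u \<and> u \<le> n) \<or> (n < u \<and> 1 \<le> u - n \<and> u - n \<le> n)" if "u \<le> 2*n" for u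
    using that by linarith
  have f0: "f 0 = c" and fa: "1 \<le> u \<Longrightarrow> u \<le> n \<Longrightarrow> f u = a u" and fp: "n < u \<Longrightarrow> f u = p (u - n)" for u
    by (auto simp: f_def)
  have inj: "u = v" if u: "u \<le> 2*n" and v: "v \<le> 2*n" and e: "f u = f v" for u v
    using kinds[OF u]
  proof (elim disjE conjE)
    assume "u = 0"
    then show ?thesis using kinds[OF v] e f0 fa fp ca B1 by (metis less_nat_zero_code)
  next
    assume u1: "1 \<le> u" "u \<le> n"
    from kinds[OF v] show ?thesis
    proof (elim disjE conjE)
      assume "v = 0" then show ?thesis using e f0 fa[OF u1] ca[OF u1] by simp
    next
      assume v1: "1 \<le> v" "v \<le> n" then show ?thesis using e fa[OF v1] fa[OF u1] B2[OF u1 v1] by auto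
    next
      assume v1: "n < v" "1 \<le> v - n" "v - n \<le> n" then show ?thesis using e fa[OF u1] fp[OF v1(1)] B4[OF u1 v1(2,3)] by simp
    qed
  next
    assume u1: "n < u" "1 \<le> u - n" "u - n \<le> n"
    from kinds[OF v] show ?thesis
    proof (elim disjE conjE)
      assume "v = 0" then show ?thesis using e f0 fp[OF u1(1)] B1[OF u1(2,3)] by simp
    next
      assume v1: "1 \<le> v" "v \<le> n" then show ?thesis using e fa[OF v1] fp[OF u1(1)] B4[OF v1 u1(2,3)] by simp
    next
      assume v1: "n < v" "1 \<le> v - n" "v - n \<le> n"
      then have "p (u - n) = p (v - n)" using e fp u1 by simp
      then have "u - n = v - n" using B2[OF u1(2,3) v1(2,3)] by blast
      then show ?thesis using u1 v1 by linarith
    qed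
  qed
  have inV: "f u \<in> verts G" if u: "u \<le> 2*n" for u
    using kinds[OF u]
  proof (elim disjE conjE)
    assume "u = 0" then show ?thesis using B0 f0 by simp
  next
    assume u1: "1 \<le> u" "u \<le> n" then show ?thesis using B3[OF u1 u1] adjD fa[OF u1] by metis
  next
    assume u1: "n < u" "1 \<le> u - n" "u - n \<le> n" then show ?thesis
      using B3[OF u1(2,3) u1(2,3)] adjD fp[OF u1(1)] by metis
  qed
  have edge: "adj (K1n_star n) u v \<longleftrightarrow> adj G (f u) (f v)" if u: "u \<le> 2*n" and v: "v \<le> 2*n" for u v
  proof -
    have K: "adj (K1n_star n) u v \<longleftrightarrow> (u = 0 \<and> 1 \<le> v \<and> v \<le> n) \<or> (v = 0 \<and> 1 \<le> u \<and> u \<le> n) \<or> (1 \<le> u \<and> u \<le> n \<and> v = n + u) \<or> (1 \<le> v \<and> v \<le> n \<and> u = n + v)"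
      unfolding adj_def by (rule K1n_edge[OF u v])
    from kinds[OF u] show ?thesis
    proof (elim disjE conjE)
      assume u0: "u = 0"
      from kinds[OF v] show ?thesis
      proof (elim disjE conjE)
        assume "v = 0" then show ?thesis using u0 K f0 adj_irrefl by simp
      next
        assume v1: "1 \<le> v" "v \<le> n" then show ?thesis using u0 K f0 fa[OF v1] B1[OF v1] by simp
      next
        assume v1: "n < v" "1 \<le> v - n" "v - n \<le> n" then show ?thesis
          using u0 K f0 fp[OF v1(1)] B1[OF v1(2,3)] by simp
      qed
    next
      assume u1: "1 \<le> u" "u \<le> n"
      from kinds[OF v] show ?thesis
      proof (elim disjE conjE)
        assume "v = 0" then show ?thesis using u1 K f0 fa[OF u1] B1[OF u1] adj_sym[of G "a u" c] by simp
      next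
        assume v1: "1 \<le> v" "v \<le> n"
        have "\<not> adj (K1n_star n) u v" using K u1 v1 by linarith
        moreover have "\<not> adj G (f u) (f v)" using fa[OF u1] fa[OF v1] B2[OF u1 v1] adj_irrefl
          by (cases "u = v") auto
        ultimately show ?thesis by simp
      next
        assume v1: "n < v" "1 \<le> v - n" "v - n \<le> n"
        have "adj (K1n_star n) u v \<longleftrightarrow> u = v - n" using K u1 v1 by linarith
        moreover have "adj G (f u) (f v) \<longleftrightarrow> u = v - n" using fa[OF u1] fp[OF v1(1)] B3[OF u1 v1(2,3)]
          by simp
        ultimately show ?thesis by simp
      qed
    next
      assume u1: "n < u" "1 \<le> u - n" "u - n \<le> n"
      from kinds[OF v] show ?thesis
      proof (elim disjE conjE)
        assume v0: "v = 0" then show ?thesis using u1 K f0 fp[OF u1(1)] B1[OF u1(2,3)] adj_sym[of G "p (u-n)" c] by simp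
      next
        assume v1: "1 \<le> v" "v \<le> n"
        have "adj (K1n_star n) u v \<longleftrightarrow> v = u - n" using K u1 v1 by linarith
        moreover have "adj G (f u) (f v) \<longleftrightarrow> v = u - n" using fa[OF v1] fp[OF u1(1)] B3[OF v1 u1(2,3)] adj_sym[of G "p (u-n)" "a v"]
          by simp
        ultimately show ?thesis by simp
      next
        assume v1: "n < v" "1 \<le> v - n" "v - n \<le> n"
        have "\<not> adj (K1n_star n) u v" using K u1 v1 by linarith
        moreover have "\<not> adj G (f u) (f v)" using fp[OF u1(1)] fp[OF v1(1)] B2[OF u1(2,3) v1(2,3)] adj_irrefl
          by (cases "u - n = v - n") auto
        ultimately show ?thesis by simp
      qed
    qed
  qed
  show ?thesis unfolding induced_sub_def
  proof (intro exI[of _ f] conjI ballI)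
    show "inj_on f (verts (K1n_star n))" using inj by (auto simp: V inj_on_def)
    show "f ` verts (K1n_star n) \<subseteq> verts G" using inV by (auto simp: V)
    fix u v assume "u \<in> verts (K1n_star n)" "v \<in> verts (K1n_star n)"
    then show "{u, v} \<in> edges (K1n_star n) \<longleftrightarrow> {f u, f v} \<in> edges G"
      using edge unfolding adj_def by (auto simp: V)
  qed
qed

end

lemma pigeon:
  assumes "finite A" "\<forall>y\<in>g ` A. card {x\<in>A. g x = y} \<le> q"
  shows "card A \<le> card (g ` A) * q"
proof -
  have "A = (\<Union>y\<in>g ` A. {x\<in>A. g x = y})" by auto
  then have "card A \<le> (\<Sum>y\<in>g ` A. card {x\<in>A. g x = y})"
    by (metis card_UN_le assms(1) finite_imageI)
  also have "\<dots> \<le> card (g ` A) * q"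
    using sum_bounded_above[of "g ` A" "\<lambda>y. card {x\<in>A. g x = y}" q] assms(2) by simp
  finally show ?thesis .
qed

lemma sep_subset:
  fixes X :: "nat set"
  assumes "finite X" "4 * k \<le> card X"
  shows "\<exists>Y\<subseteq>X. finite Y \<and> card Y = k \<and> (\<forall>x\<in>Y. \<forall>y\<in>Y. x \<noteq> y \<longrightarrow> x + 4 \<le> y \<or> y + 4 \<le> x)"
  using assms
proof (induction k arbitrary: X)
  case 0 then show ?case by (intro exI[of _ "{}"]) auto
next
  case (Suc k)
  have ne: "X \<noteq> {}" using Suc.prems(2) by auto
  define m where "m = Max X"
  have mX: "m \<in> X" using Max_in[OF Suc.prems(1) ne] m_def by simp
  have mmax: "x \<le> m" if "x \<in> X" for x using Max_ge[OF Suc.prems(1) that] m_def by simp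
  define X' where "X' = {x\<in>X. x + 4 \<le> m}"
  have "{x\<in>X. \<not> x + 4 \<le> m} \<subseteq> {m-3..m}"
  proof
    fix x assume "x \<in> {x\<in>X. \<not> x + 4 \<le> m}"
    then have "x \<in> X" "m < x + 4" by auto
    then have "x \<le> m" "m - 3 \<le> x" using mmax[of x] by linarith+
    then show "x \<in> {m-3..m}" by simp
  qed
  then have c4: "card {x\<in>X. \<not> x + 4 \<le> m} \<le> 4"
  proof -
    have "card {m-3..m} \<le> 4" by simp
    then show ?thesis using card_mono[OF finite_atLeastAtMost \<open>{x\<in>X. \<not> x + 4 \<le> m} \<subseteq> {m-3..m}\<close>]
      by linarith
  qed
  have "X = X' \<union> {x\<in>X. \<not> x + 4 \<le> m}" unfolding X'_def by auto
  then have "card X \<le> card X' + card {x\<in>X. \<not> x + 4 \<le> m}" by (metis card_Un_le)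
  moreover have "4 + 4 * k \<le> card X" using Suc.prems(2) by simp
  ultimately have "4 * k \<le> card X'" using c4 by linarith
  moreover have fX': "finite X'" using Suc.prems(1) X'_def by simp
  ultimately have "\<exists>Y\<subseteq>X'. finite Y \<and> card Y = k \<and> (\<forall>x\<in>Y. \<forall>y\<in>Y. x \<noteq> y \<longrightarrow> x + 4 \<le> y \<or> y + 4 \<le> x)"
    using Suc.IH[OF fX'] by blast
  then obtain Y' where Y': "Y' \<subseteq> X'" "finite Y'" "card Y' = k"
    "\<forall>x\<in>Y'. \<forall>y\<in>Y'. x \<noteq> y \<longrightarrow> x + 4 \<le> y \<or> y + 4 \<le> x"
    by blast
  have mY: "m \<notin> Y'" using Y'(1) X'_def by auto
  show ?case
  proof (intro exI[of _ "insert m Y'"] conjI)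
    show "insert m Y' \<subseteq> X" using mX Y'(1) X'_def by auto
    show "finite (insert m Y')" using Y'(2) by simp
    show "card (insert m Y') = Suc k" using Y'(2,3) mY by simp
    show "\<forall>x\<in>insert m Y'. \<forall>y\<in>insert m Y'. x \<noteq> y \<longrightarrow> x + 4 \<le> y \<or> y + 4 \<le> x"
    proof (intro ballI impI)
      fix x y assume xy: "x \<in> insert m Y'" "y \<in> insert m Y'" "x \<noteq> y"
      have le: "z + 4 \<le> m" if "z \<in> Y'" for z using that Y'(1) X'_def by auto
      show "x + 4 \<le> y \<or> y + 4 \<le> x"
      proof (cases "x = m")
        case True then show ?thesis using xy le by auto
      next
        case False
        then have "x \<in> Y'" using xy by auto
        show ?thesis
        proof (cases "y = m")
          case True then show ?thesis using le[OF \<open>x \<in> Y'\<close>] by auto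
        next
          case False then have "y \<in> Y'" using xy by auto
          then show ?thesis using Y'(4) \<open>x \<in> Y'\<close> xy(3) by blast
        qed
      qed
    qed
  qed
qed

lemma sum_out_in:
  assumes "finite X"
  shows "(\<Sum>x\<in>X. card {y\<in>X. C x y}) = (\<Sum>x\<in>X. card {y\<in>X. C y x})"
proof -
  have "(\<Sum>x\<in>X. card {y\<in>X. C x y}) = card (Sigma X (\<lambda>x. {y\<in>X. C x y}))"
    using assms by (simp add: card_SigmaI)
  also have "\<dots> = card ((\<lambda>(x,y). (y,x)) ` Sigma X (\<lambda>x. {y\<in>X. C x y}))"
    by (rule card_image[symmetric]) (auto simp: inj_on_def)
  also have "(\<lambda>(x,y). (y,x)) ` Sigma X (\<lambda>x. {y\<in>X. C x y}) = Sigma X (\<lambda>x. {y\<in>X. C y x})"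
    by auto
  also have "card \<dots> = (\<Sum>x\<in>X. card {y\<in>X. C y x})"
    using assms by (simp add: card_SigmaI)
  finally show ?thesis .
qed

lemma indep_select:
  assumes "finite X" "\<forall>x\<in>X. card {y\<in>X. C x y} \<le> k"
  shows "\<exists>J\<subseteq>X. card X \<le> card J * (2*k+1) \<and> (\<forall>x\<in>J. \<forall>y\<in>J. x \<noteq> y \<longrightarrow> \<not> C x y)"
  using assms
proof (induction "card X" arbitrary: X rule: less_induct)
  case less
  show ?case
  proof (cases "X = {}")
    case True then show ?thesis by (intro exI[of _ "{}"]) auto
  next
    case False
    have "\<exists>x\<in>X. card {y\<in>X. C x y} + card {y\<in>X. C y x} \<le> 2*k"
    proof (rule ccontr)
      assume na: "\<not> ?thesis"
      let ?o = "\<lambda>x. card {y\<in>X. C x y}" and ?i = "\<lambda>x. card {y\<in>X. C y x}"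
      have lt: "2*k < ?o x + ?i x" if "x \<in> X" for x using na that by (simp add: not_le)
      have "(\<Sum>x\<in>X. 2*k) < (\<Sum>x\<in>X. ?o x + ?i x)"
        by (rule sum_strict_mono[OF less.prems(1) False lt])
      also have "(\<Sum>x\<in>X. ?o x + ?i x) = (\<Sum>x\<in>X. ?o x) + (\<Sum>x\<in>X. ?i x)"
        by (rule sum.distrib)
      also have "(\<Sum>x\<in>X. ?i x) = (\<Sum>x\<in>X. ?o x)"
        by (rule sum_out_in[OF less.prems(1), symmetric])
      also have "(\<Sum>x\<in>X. ?o x) \<le> (\<Sum>x\<in>X. k)"
        by (rule sum_mono) (use less.prems(2) in blast)
      finally have "(\<Sum>x\<in>X. 2*k) < (\<Sum>x\<in>X. k) + (\<Sum>x\<in>X. k)"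
        by linarith
      then show False by simp
    qed
    then obtain x where x: "x \<in> X" "card {y\<in>X. C x y} + card {y\<in>X. C y x} \<le> 2*k" by blast
    define N where "N = insert x ({y\<in>X. C x y} \<union> {y\<in>X. C y x})"
    have cN: "card N \<le> 2*k+1"
    proof -
      have "finite ({y\<in>X. C x y} \<union> {y\<in>X. C y x})" using less.prems(1) by simp
      then have "card N \<le> Suc (card ({y\<in>X. C x y} \<union> {y\<in>X. C y x}))"
        unfolding N_def by (simp add: card_insert_if)
      also have "\<dots> \<le> Suc (card {y\<in>X. C x y} + card {y\<in>X. C y x})"
        using card_Un_le by auto
      finally show ?thesis using x(2) by simp
    qed
    define X' where "X' = X - N"
    have fX': "finite X'" using less.prems(1) X'_def by simp
    have lt: "card X' < card X"
      unfolding X'_def by (rule psubset_card_mono) (use less.prems(1) x(1) N_def in auto)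
    have "\<forall>z\<in>X'. card {y\<in>X'. C z y} \<le> k"
    proof
      fix z assume "z \<in> X'"
      then have "z \<in> X" using X'_def by simp
      have "card {y\<in>X'. C z y} \<le> card {y\<in>X. C z y}"
        by (rule card_mono) (use less.prems(1) X'_def in auto)
      moreover have "card {y\<in>X. C z y} \<le> k" using less.prems(2) \<open>z \<in> X\<close> by blast
      ultimately show "card {y\<in>X'. C z y} \<le> k" by linarith
    qed
    then obtain J' where J': "J' \<subseteq> X'" "card X' \<le> card J' * (2*k+1)"
      "\<forall>a\<in>J'. \<forall>b\<in>J'. a \<noteq> b \<longrightarrow> \<not> C a b"
      using less.hyps[OF lt fX'] by blast
    have xJ': "x \<notin> J'" using J'(1) X'_def N_def by auto
    have fJ': "finite J'" using J'(1) fX' finite_subset by blast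
    show ?thesis
    proof (intro exI[of _ "insert x J'"] conjI)
      show "insert x J' \<subseteq> X" using x(1) J'(1) X'_def by auto
      have "card X \<le> card X' + card N"
      proof -
        have "X \<subseteq> X' \<union> N" using X'_def by auto
        then have "card X \<le> card (X' \<union> N)" by (rule card_mono[rotated]) (use fX' less.prems(1) N_def in auto)
        also have "\<dots> \<le> card X' + card N" by (rule card_Un_le)
        finally show ?thesis .
      qed
      then show "card X \<le> card (insert x J') * (2*k+1)"
        using J'(2) cN xJ' fJ' by simp
      show "\<forall>a\<in>insert x J'. \<forall>b\<in>insert x J'. a \<noteq> b \<longrightarrow> \<not> C a b"
      proof (intro ballI impI)
        fix a b assume ab: "a \<in> insert x J'" "b \<in> insert x J'" "a \<noteq> b"
        have nx: "\<not> C x c \<and> \<not> C c x" if "c \<in> J'" for c using that J'(1) X'_def N_def by blast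
        show "\<not> C a b"
        proof (cases "a = x")
          case True then show ?thesis using ab nx by auto
        next
          case False then have "a \<in> J'" using ab by auto
          then show ?thesis using ab nx J'(3) by auto
        qed
      qed
    qed
  qed
qed

context wfg
begin

definition dist :: "'a \<Rightarrow> 'a \<Rightarrow> nat" where "dist r w = (LEAST k. (adj G ^^ k) r w)"

lemma dist_path: "conn r w \<Longrightarrow> (adj G ^^ dist r w) r w"
  unfolding dist_def rtranclp_power by (erule exE) (rule LeastI)

lemma dist_le: "(adj G ^^ k) r w \<Longrightarrow> dist r w \<le> k"
  unfolding dist_def by (rule Least_le)

lemma dist_adj: "conn r u \<Longrightarrow> adj G u w \<Longrightarrow> dist r w \<le> Suc (dist r u)"
  using dist_path relpowp_Suc_I dist_le by metis

lemma conn_step: "conn r u \<Longrightarrow> adj G u w \<Longrightarrow> conn r w"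
  by (rule rtranclp.rtrancl_into_rtrancl)

lemma dist_adj2: "conn r u \<Longrightarrow> adj G u w \<Longrightarrow> dist r u \<le> Suc (dist r w)"
  using dist_adj[of r w u] conn_step adj_sym by metis

lemma dist_0: "conn r w \<Longrightarrow> dist r w = 0 \<Longrightarrow> w = r"
  using dist_path by (metis relpowp_0_E)

lemma dist_r: "dist r r = 0"
  using dist_le[of 0 r r] by simp

lemma dist_pred: "conn r w \<Longrightarrow> w \<noteq> r \<Longrightarrow> \<exists>p. adj G p w \<and> Suc (dist r p) = dist r w \<and> conn r p"
proof -
  assume c: "conn r w" and ne: "w \<noteq> r"
  then obtain k where k: "dist r w = Suc k" using dist_0 by (cases "dist r w") auto
  then have "(adj G ^^ Suc k) r w" using dist_path[OF c] by simp
  then obtain p where p: "(adj G ^^ k) r p" "adj G p w" by (rule relpowp_Suc_E)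
  have cp: "conn r p" using p(1) rtranclp_power by metis
  have "dist r p \<le> k" using dist_le[OF p(1)] .
  moreover have "dist r w \<le> Suc (dist r p)" using dist_adj[OF cp p(2)] .
  ultimately show ?thesis using p(2) cp k by (intro exI[of _ p]) auto
qed

lemma path_through: "(adj G ^^ k) r w \<Longrightarrow> r \<noteq> s \<Longrightarrow> w \<noteq> s \<Longrightarrow> \<not> connS s r w \<Longrightarrow> \<exists>j<k. (adj G ^^ j) r s"
proof (induction k arbitrary: w)
  case 0
  then show ?case by (metis relpowp_0_E rtranclp.rtrancl_refl)
next
  case (Suc k)
  from Suc.prems(1) obtain u where u: "(adj G ^^ k) r u" "adj G u w" by (rule relpowp_Suc_E)
  show ?case
  proof (cases "u = s")
    case True then show ?thesis using u by auto
  next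
    case False
    have "\<not> connS s r u"
    proof
      assume "connS s r u"
      then have "connS s r w" using u(2) False Suc.prems(3) adj_del
        by (metis rtranclp.rtrancl_into_rtrancl)
      then show False using Suc.prems(4) by simp
    qed
    then obtain j where "j < k" "(adj G ^^ j) r s" using Suc.IH[OF u(1) Suc.prems(2) False] by blast
    then show ?thesis by (intro exI[of _ j]) auto
  qed
qed

lemma dist_C: "conn r w \<Longrightarrow> r \<noteq> s \<Longrightarrow> w \<noteq> s \<Longrightarrow> \<not> connS s r w \<Longrightarrow> dist r s < dist r w"
  using path_through[OF dist_path] dist_le by (meson le_less_trans)

lemma cut_nbrs:
  assumes "sdeg G s \<ge> 2"
  shows "\<exists>z z'. adj G s z \<and> adj G s z' \<and> \<not> connS s z z'"
proof -
  obtain x y where xy: "x \<in> verts G - {s}" "y \<in> verts G - {s}" "conn x y" "\<not> connS s x y"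
    using split_of_sdeg[OF assms] by blast
  obtain z where z: "adj G s z" "connS s z y"
    using decomp[OF xy(3), of s] xy by auto
  have nyx: "\<not> connS s y x" using xy(4) connS_sym by blast
  obtain z' where z': "adj G s z'" "connS s z' x"
    using decomp[OF conn_sym[OF xy(3)], of s] xy nyx by auto
  have "\<not> connS s z z'"
  proof
    assume "connS s z z'"
    then have "connS s x y" using z(2) z'(2) connS_sym by (meson rtranclp_trans)
    then show False using xy(4) by simp
  qed
  then show ?thesis using z z' by blast
qed

lemma pendant:
  assumes "sdeg G s \<ge> 2"
  shows "\<exists>b. adj G s b \<and> \<not> connS s r b"
proof -
  obtain z z' where z: "adj G s z" "adj G s z'" "\<not> connS s z z'" using cut_nbrs[OF assms] by blast
  have "\<not> (connS s r z \<and> connS s r z')"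
    using z(3) connS_sym by (meson rtranclp_trans)
  then show ?thesis using z by blast
qed

lemma C_step: "\<not> connS s r w \<Longrightarrow> adj G w x \<Longrightarrow> x \<noteq> s \<Longrightarrow> w \<noteq> s \<Longrightarrow> \<not> connS s r x"
  using adj_del adj_sym by (metis rtranclp.rtrancl_into_rtrancl)

end

lemma enum:
  assumes "finite Y" "card Y = n"
  obtains h where "\<And>i. i < n \<Longrightarrow> h i \<in> Y" "\<And>i j. i < n \<Longrightarrow> j < n \<Longrightarrow> h i = h j \<Longrightarrow> i = j"
proof -
  obtain h where h: "bij_betw h {0..<n} Y" using ex_bij_betw_nat_finite[OF assms(1)] assms(2) by blast
  show ?thesis
  proof
    show "\<And>i. i < n \<Longrightarrow> h i \<in> Y" using h by (auto simp: bij_betw_def)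
    show "\<And>i j. i < n \<Longrightarrow> j < n \<Longrightarrow> h i = h j \<Longrightarrow> i = j"
      using h by (auto simp: bij_betw_def inj_on_def)
  qed
qed

locale rooted = wfg + fixes r assumes r: "r \<in> verts G"
begin

abbreviation "d \<equiv> dist r"
definition Sr where "Sr = {s. sdeg G s \<ge> 2 \<and> conn r s \<and> s \<noteq> r}"
definition pa where "pa s = (SOME p. adj G p s \<and> Suc (d p) = d s \<and> conn r p)"
definition pb where "pb s = (SOME b. adj G s b \<and> \<not> connS s r b)"

lemma conn_V: "conn r x \<Longrightarrow> x \<in> verts G" using conn_verts r by blast

lemma Sr_D: "s \<in> Sr \<Longrightarrow> sdeg G s \<ge> 2 \<and> conn r s \<and> s \<noteq> r" by (simp add: Sr_def)

lemma pa: assumes "s \<in> Sr" shows "adj G (pa s) s \<and> Suc (d (pa s)) = d s \<and> conn r (pa s)"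
proof -
  have "\<exists>p. adj G p s \<and> Suc (d p) = d s \<and> conn r p" using dist_pred Sr_D[OF assms] by blast
  then show ?thesis unfolding pa_def by (rule someI_ex)
qed

lemma pb0: assumes "s \<in> Sr" shows "adj G s (pb s) \<and> \<not> connS s r (pb s)"
proof -
  have "\<exists>b. adj G s b \<and> \<not> connS s r b" using pendant Sr_D[OF assms] by blast
  then show ?thesis unfolding pb_def by (rule someI_ex)
qed

lemma pb_ne: "s \<in> Sr \<Longrightarrow> pb s \<noteq> s" using pb0 adjD by metis

lemma pb_conn: "s \<in> Sr \<Longrightarrow> conn r (pb s)" using pb0 Sr_D conn_step by metis

lemma pb_d: assumes "s \<in> Sr" shows "d (pb s) = Suc (d s)"
proof -
  have "d (pb s) \<le> Suc (d s)" using dist_adj Sr_D[OF assms] pb0[OF assms] by blast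
  moreover have "d s < d (pb s)"
    using dist_C[OF pb_conn[OF assms]] Sr_D[OF assms] pb_ne[OF assms] pb0[OF assms] by metis
  ultimately show ?thesis by simp
qed

lemma lev: "conn r x \<Longrightarrow> adj G x y \<Longrightarrow> d y \<le> Suc (d x) \<and> d x \<le> Suc (d y)"
  using dist_adj dist_adj2 by blast

lemma pb_nonadj:
  assumes "s \<in> Sr" "conn r x" "d x \<le> d s" "x \<noteq> s"
  shows "\<not> adj G (pb s) x"
proof
  assume a: "adj G (pb s) x"
  have "\<not> connS s r x" using C_step[OF _ a assms(4) pb_ne[OF assms(1)]] pb0[OF assms(1)] by blast
  then have "d s < d x" using dist_C[OF assms(2)] Sr_D[OF assms(1)] assms(4) by metis
  then show False using assms(3) by simp
qed

lemma pb_pair: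
  assumes "s \<in> Sr" "t \<in> Sr" "s \<noteq> t" "d s = d t"
  shows "pb s \<noteq> pb t \<and> \<not> adj G (pb s) (pb t)"
proof
  show "pb s \<noteq> pb t"
  proof
    assume e: "pb s = pb t"
    have "adj G (pb s) t" using pb0[OF assms(2)] e adj_sym by metis
    moreover have "conn r t" using Sr_D[OF assms(2)] by blast
    then have "\<not> adj G (pb s) t"
      using pb_nonadj[OF assms(1)] assms by simp
    ultimately show False by simp
  qed
  show "\<not> adj G (pb s) (pb t)"
  proof
    assume a: "adj G (pb s) (pb t)"
    have pts: "pb t \<noteq> s" using pb_d[OF assms(2)] assms(4) by auto
    have "connS s r (pb t)"
    proof (rule ccontr)
      assume "\<not> connS s r (pb t)"
      moreover have "adj G (pb t) t" using pb0[OF assms(2)] adj_sym by metis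
      ultimately have "\<not> connS s r t" using C_step assms(3) pts by metis
      then have "d s < d t" using dist_C Sr_D[OF assms(2)] Sr_D[OF assms(1)] assms(3) by metis
      then show False using assms(4) by simp
    qed
    moreover have "\<not> connS s r (pb t)"
      using C_step[OF _ a pts pb_ne[OF assms(1)]] pb0[OF assms(1)] by blast
    ultimately show False by simp
  qed
qed

lemma triple_ok:
  assumes "s \<in> Sr"
  shows "adj G (pa s) s \<and> adj G s (pb s) \<and> \<not> adj G (pa s) (pb s) \<and> pa s \<noteq> pb s"
proof -
  have "\<not> adj G (pa s) (pb s)"
  proof
    assume "adj G (pa s) (pb s)"
    then have "d (pb s) \<le> Suc (d (pa s))" using lev pa[OF assms] by blast
    then show False using pa[OF assms] pb_d[OF assms] by simp
  qed
  moreover have "pa s \<noteq> pb s" using pa[OF assms] pb_d[OF assms] by (metis Suc_n_not_le_n le_add2 plus_1_eq_Suc)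
  ultimately show ?thesis using pa[OF assms] pb0[OF assms] by blast
qed

end

context rooted
begin

lemma L1:
  assumes Y: "Y \<subseteq> Sr" "finite Y" "card Y = n"
    and sep: "\<forall>s\<in>Y. \<forall>t\<in>Y. s \<noteq> t \<longrightarrow> d s + 4 \<le> d t \<or> d t + 4 \<le> d s"
  shows "nP3 n \<prec> G"
proof -
  obtain h where hY: "\<And>i. i<n \<Longrightarrow> h i \<in> Y" and hi: "\<And>i j. i<n \<Longrightarrow> j<n \<Longrightarrow> h i = h j \<Longrightarrow> i = j"
    using enum[OF Y(2,3)] by blast
  have trip: "conn r x \<and> d s \<le> Suc (d x) \<and> d x \<le> Suc (d s)" if "s \<in> Sr" "x \<in> {pa s, s, pb s}" for s x
    using that pa[OF that(1)] pb_d[OF that(1)] pb_conn[OF that(1)] Sr_D[OF that(1)] by auto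
  show ?thesis
  proof (rule emb_nP3[of n "\<lambda>i. pa (h i)" h "\<lambda>i. pb (h i)"])
    fix i assume "i < n"
    then have "h i \<in> Sr" using hY Y(1) by blast
    then show "adj G (pa (h i)) (h i) \<and> adj G (h i) (pb (h i)) \<and> \<not> adj G (pa (h i)) (pb (h i)) \<and> pa (h i) \<noteq> pb (h i)"
      by (rule triple_ok)
  next
    fix i j x y assume ij: "i < n" "j < n" "i \<noteq> j" and x: "x \<in> {pa (h i), h i, pb (h i)}"
      and y: "y \<in> {pa (h j), h j, pb (h j)}"
    have s: "h i \<in> Sr" "h j \<in> Sr" using hY ij Y(1) by auto
    have ne: "h i \<noteq> h j" using hi ij by blast
    have sp: "d (h i) + 4 \<le> d (h j) \<or> d (h j) + 4 \<le> d (h i)" using sep hY ij ne by blast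
    have tx: "conn r x" "d (h i) \<le> Suc (d x)" "d x \<le> Suc (d (h i))" using trip[OF s(1) x] by auto
    have ty: "d (h j) \<le> Suc (d y)" "d y \<le> Suc (d (h j))" using trip[OF s(2) y] by auto
    show "x \<noteq> y \<and> \<not> adj G x y"
    proof
      show "x \<noteq> y"
      proof
        assume e: "x = y"
        have "d (h j) \<le> Suc (d x)" "d x \<le> Suc (d (h j))" using ty e by auto
        then show False using tx sp by linarith
      qed
      show "\<not> adj G x y"
      proof
        assume "adj G x y"
        then have "d y \<le> Suc (d x) \<and> d x \<le> Suc (d y)" using lev tx(1) by blast
        then show False using tx ty sp by linarith
      qed
    qed
  qed
qed

lemma L2:
  assumes K: "K \<subseteq> Sr" "finite K" "card K = n" and lv: "\<forall>s\<in>K. \<forall>t\<in>K. d s = d t"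
    and cl: "\<forall>s\<in>K. \<forall>t\<in>K. s \<noteq> t \<longrightarrow> adj G s t"
  shows "Kn_star n \<prec> G"
proof -
  obtain h where hY: "\<And>i. i<n \<Longrightarrow> h i \<in> K" and hi: "\<And>i j. i<n \<Longrightarrow> j<n \<Longrightarrow> h i = h j \<Longrightarrow> i = j"
    using enum[OF K(2,3)] by blast
  have hS: "h i \<in> Sr" if "i < n" for i using hY[OF that] K(1) by blast
  have hd: "d (h i) = d (h j)" if "i < n" "j < n" for i j using lv hY that by blast
  show ?thesis
  proof (rule emb_Kn[of n h "\<lambda>i. pb (h i)"])
    fix i j assume ij: "i<n" "j<n" "i\<noteq>j"
    then have "h i \<noteq> h j" using hi by blast
    then show "h i \<noteq> h j \<and> adj G (h i) (h j)" using cl hY ij by blast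
  next
    fix i j assume ij: "i<n" "j<n"
    show "adj G (pb (h i)) (h j) \<longleftrightarrow> i = j"
    proof
      assume a: "adj G (pb (h i)) (h j)"
      show "i = j"
      proof (rule ccontr)
        assume "i \<noteq> j"
        then have "h j \<noteq> h i" using hi ij by metis
        moreover have "conn r (h j)" using Sr_D hS ij by blast
        ultimately have "\<not> adj G (pb (h i)) (h j)" using pb_nonadj[OF hS[OF ij(1)]] hd[OF ij] by simp
        then show False using a by simp
      qed
    next
      assume "i = j" then show "adj G (pb (h i)) (h j)" using pb0[OF hS[OF ij(1)]] adj_sym by metis
    qed
  next
    fix i j assume ij: "i<n" "j<n" "i\<noteq>j"
    then have "h i \<noteq> h j" using hi by blast
    then show "pb (h i) \<noteq> pb (h j) \<and> \<not> adj G (pb (h i)) (pb (h j))"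
      using pb_pair[OF hS[OF ij(1)] hS[OF ij(2)]] hd[OF ij(1,2)] by blast
  next
    fix i j assume ij: "i<n" "j<n"
    show "pb (h i) \<noteq> h j" using pb_d[OF hS[OF ij(1)]] hd[OF ij] by (metis n_not_Suc_n)
  qed
qed

lemma L3:
  assumes Y: "Y \<subseteq> Sr" "finite Y" "card Y = n" and lv: "\<forall>s\<in>Y. d s = L"
    and ind: "\<forall>s\<in>Y. \<forall>t\<in>Y. \<not> adj G s t" and c: "conn r c" "Suc (d c) = L" "\<forall>s\<in>Y. adj G c s"
  shows "K1n_star n \<prec> G"
proof -
  obtain h where hY: "\<And>i. i<n \<Longrightarrow> h i \<in> Y" and hi: "\<And>i j. i<n \<Longrightarrow> j<n \<Longrightarrow> h i = h j \<Longrightarrow> i = j"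
    using enum[OF Y(2,3)] by blast
  have hS: "h (i-1) \<in> Sr" "h (i-1) \<in> Y" if "1 \<le> i" "i \<le> n" for i using hY that Y(1) by auto
  have hd: "d (h (i-1)) = L" if "1 \<le> i" "i \<le> n" for i using lv hS[OF that] by blast
  show ?thesis
  proof (rule emb_K1n[of c n "\<lambda>i. h (i-1)" "\<lambda>i. pb (h (i-1))"])
    show "c \<in> verts G" using conn_V c(1) by blast
  next
    fix i assume i: "1 \<le> i" "i \<le> n"
    have cn: "c \<noteq> h (i-1)" using hd[OF i] c(2) by auto
    have "\<not> adj G (pb (h (i-1))) c"
      by (rule pb_nonadj[OF hS(1)[OF i] c(1)]) (use hd[OF i] c(2) cn in auto)
    moreover have "c \<noteq> pb (h (i-1))" using pb_d[OF hS(1)[OF i]] hd[OF i] c(2) by auto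
    ultimately show "adj G c (h (i-1)) \<and> \<not> adj G c (pb (h (i-1))) \<and> c \<noteq> pb (h (i-1))"
      using c(3) hS(2)[OF i] adj_sym by metis
  next
    fix i j assume ij: "1 \<le> i" "i \<le> n" "1 \<le> j" "j \<le> n" "i \<noteq> j"
    have lt: "i-1 < n" "j-1 < n" "i-1 \<noteq> j-1" using ij by auto
    then have ne: "h (i-1) \<noteq> h (j-1)" using hi[of "i-1" "j-1"] by blast
    have "pb (h (i-1)) \<noteq> pb (h (j-1)) \<and> \<not> adj G (pb (h (i-1))) (pb (h (j-1)))"
      using pb_pair[OF hS(1)[OF ij(1,2)] hS(1)[OF ij(3,4)] ne] hd ij by simp
    then show "h (i-1) \<noteq> h (j-1) \<and> \<not> adj G (h (i-1)) (h (j-1)) \<and> pb (h (i-1)) \<noteq> pb (h (j-1)) \<and>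
       \<not> adj G (pb (h (i-1))) (pb (h (j-1)))"
      using ne ind hS(2)[OF ij(1,2)] hS(2)[OF ij(3,4)] by blast
  next
    fix i j assume ij: "1 \<le> i" "i \<le> n" "1 \<le> j" "j \<le> n"
    show "adj G (h (i-1)) (pb (h (j-1))) \<longleftrightarrow> i = j"
    proof
      assume a: "adj G (h (i-1)) (pb (h (j-1)))"
      show "i = j"
      proof (rule ccontr)
        assume "i \<noteq> j"
        moreover have "i-1 < n" "j-1 < n" using ij by auto
        ultimately have "h (i-1) \<noteq> h (j-1)" using hi[of "i-1" "j-1"] ij by auto
        moreover have "conn r (h (i-1))" using Sr_D hS ij by blast
        ultimately have "\<not> adj G (pb (h (j-1))) (h (i-1))"
          using pb_nonadj[OF hS(1)[OF ij(3,4)]] hd ij by simp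
        then show False using a adj_sym by metis
      qed
    next
      assume "i = j" then show "adj G (h (i-1)) (pb (h (j-1)))" using pb0[OF hS(1)[OF ij(1,2)]] by simp
    qed
  next
    fix i j assume ij: "1 \<le> i" "i \<le> n" "1 \<le> j" "j \<le> n"
    show "h (i-1) \<noteq> pb (h (j-1))" using pb_d[OF hS(1)[OF ij(3,4)]] hd[OF ij(1,2)] hd[OF ij(3,4)]
      by (metis n_not_Suc_n)
  qed
qed

end

context rooted
begin

lemma cross_ok:
  assumes st: "s \<in> Sr" "t \<in> Sr" "s \<noteq> t" "d s = d t" "\<not> adj G s t"
    and c1: "\<not> adj G (pa s) t" "\<not> adj G (pa t) s" and c2: "pa s \<noteq> pa t" "\<not> adj G (pa s) (pa t)"
    and x: "x \<in> {pa s, s, pb s}" and y: "y \<in> {pa t, t, pb t}"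
  shows "x \<noteq> y \<and> \<not> adj G x y"
proof -
  have ps: "adj G (pa s) s" "Suc (d (pa s)) = d s" "conn r (pa s)" using pa[OF st(1)] by auto
  have pt: "adj G (pa t) t" "Suc (d (pa t)) = d t" "conn r (pa t)" using pa[OF st(2)] by auto
  have bs: "d (pb s) = Suc (d s)" and bt: "d (pb t) = Suc (d t)" using pb_d st by auto
  have cs: "conn r s" and ct: "conn r t" using Sr_D st by auto
  have pat_s: "pa t \<noteq> s" using pt ps st(4) by (metis n_not_Suc_n)
  have pas_t: "pa s \<noteq> t" using pt ps st(4) by (metis n_not_Suc_n)
  have n1: "\<not> adj G (pb t) (pa s)" by (rule pb_nonadj[OF st(2) ps(3)]) (use ps st(4) pas_t in auto)
  have n2: "\<not> adj G (pb s) (pa t)" by (rule pb_nonadj[OF st(1) pt(3)]) (use pt st(4) pat_s in auto)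
  have n3: "\<not> adj G (pb t) s" by (rule pb_nonadj[OF st(2) cs]) (use st in auto)
  have n4: "\<not> adj G (pb s) t" by (rule pb_nonadj[OF st(1) ct]) (use st in auto)
  have n5: "pb s \<noteq> pb t \<and> \<not> adj G (pb s) (pb t)" by (rule pb_pair[OF st(1-4)])
  have d1: "pa s \<noteq> pb t" using ps bt st(4) by (metis Suc_n_not_le_n le_SucI order.refl)
  have d2: "pb s \<noteq> pa t" using pt bs st(4) by (metis Suc_n_not_le_n le_SucI order.refl)
  have d3: "s \<noteq> pb t" using bt st(4) by (metis n_not_Suc_n)
  have d4: "pb s \<noteq> t" using bs st(4) by (metis n_not_Suc_n)
  have m1: "\<not> adj G (pa s) (pb t)" using n1 adj_sym by metis
  have m2: "\<not> adj G s (pa t)" using c1(2) adj_sym by metis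
  have m3: "\<not> adj G s (pb t)" using n3 adj_sym by metis
  from x y show ?thesis
    using c1 c2 st(3,5) n1 n2 n3 n4 n5 d1 d2 d3 d4 pat_s pas_t m1 m2 m3 by auto
qed

lemma L4:
  assumes J: "J \<subseteq> Sr" "finite J" and lv: "\<forall>s\<in>J. d s = L"
    and ind: "\<forall>s\<in>J. \<forall>t\<in>J. \<not> adj G s t"
    and cf: "\<forall>s\<in>J. \<forall>t\<in>J. s \<noteq> t \<longrightarrow> \<not> adj G (pa s) t"
    and R: "R \<le> card J"
    and RP: "\<And>(X::'a set) E. finite X \<Longrightarrow> R \<le> card X \<Longrightarrow> \<exists>Y\<subseteq>X. card Y = n \<and> (clique Y E \<or> indep Y E)"
  shows "Kn_star n \<prec> G \<or> nP3 n \<prec> G"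
proof -
  have injpa: "inj_on pa J"
  proof (rule inj_onI)
    fix s t assume st: "s \<in> J" "t \<in> J" "pa s = pa t"
    show "s = t"
    proof (rule ccontr)
      assume "s \<noteq> t"
      moreover have "adj G (pa s) t" using st pa J(1) by (metis subsetD)
      ultimately show False using cf st by blast
    qed
  qed
  have "card (pa ` J) = card J" using card_image[OF injpa] .
  then obtain Z where Z: "Z \<subseteq> pa ` J" "card Z = n" "clique Z (edges G) \<or> indep Z (edges G)"
    using RP[of "pa ` J" "edges G"] R J(2) by auto
  define Y where "Y = {s\<in>J. pa s \<in> Z}"
  have YJ: "Y \<subseteq> J" using Y_def by auto
  have fY: "finite Y" using J(2) YJ finite_subset by blast
  have "pa ` Y = Z" using Z(1) Y_def by auto
  then have cY: "card Y = n" using card_image[OF inj_on_subset[OF injpa YJ]] Z(2) by simp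
  obtain h where hY: "\<And>i. i<n \<Longrightarrow> h i \<in> Y" and hi: "\<And>i j. i<n \<Longrightarrow> j<n \<Longrightarrow> h i = h j \<Longrightarrow> i = j"
    using enum[OF fY cY] by blast
  have hJ: "h i \<in> J" "h i \<in> Sr" "pa (h i) \<in> Z" if "i < n" for i using hY[OF that] YJ J(1) Y_def by auto
  have hne: "h i \<noteq> h j" "pa (h i) \<noteq> pa (h j)" if "i < n" "j < n" "i \<noteq> j" for i j
    using hi that hJ injpa unfolding inj_on_def by metis+
  from Z(3) show ?thesis
  proof
    assume cl: "clique Z (edges G)"
    have "Kn_star n \<prec> G"
    proof (rule emb_Kn[of n "\<lambda>i. pa (h i)" h])
      fix i j assume ij: "i<n" "j<n" "i\<noteq>j"
      then show "pa (h i) \<noteq> pa (h j) \<and> adj G (pa (h i)) (pa (h j))"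
        using hne[OF ij] hJ(3)[OF ij(1)] hJ(3)[OF ij(2)] cl unfolding clique_def adj_def by blast
    next
      fix i j assume ij: "i<n" "j<n"
      show "adj G (h i) (pa (h j)) \<longleftrightarrow> i = j"
      proof
        assume a: "adj G (h i) (pa (h j))"
        show "i = j"
        proof (rule ccontr)
          assume "i \<noteq> j"
          then have "\<not> adj G (pa (h j)) (h i)" using cf hJ ij hne by metis
          then show False using a adj_sym by metis
        qed
      next
        assume "i = j" then show "adj G (h i) (pa (h j))" using pa[OF hJ(2)[OF ij(1)]] adj_sym by metis
      qed
    next
      fix i j assume ij: "i<n" "j<n" "i\<noteq>j"
      then show "h i \<noteq> h j \<and> \<not> adj G (h i) (h j)" using hne ind hJ by blast
    next
      fix i j assume ij: "i<n" "j<n"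
      have "Suc (d (pa (h j))) = d (h j)" using pa[OF hJ(2)[OF ij(2)]] by blast
      moreover have "d (h i) = d (h j)" using lv hJ ij by metis
      ultimately show "h i \<noteq> pa (h j)" by (metis n_not_Suc_n)
    qed
    then show ?thesis by simp
  next
    assume ic: "indep Z (edges G)"
    have "nP3 n \<prec> G"
    proof (rule emb_nP3[of n "\<lambda>i. pa (h i)" h "\<lambda>i. pb (h i)"])
      fix i assume "i < n"
      then show "adj G (pa (h i)) (h i) \<and> adj G (h i) (pb (h i)) \<and> \<not> adj G (pa (h i)) (pb (h i)) \<and> pa (h i) \<noteq> pb (h i)"
        using triple_ok hJ by blast
    next
      fix i j x y assume ij: "i < n" "j < n" "i \<noteq> j" and x: "x \<in> {pa (h i), h i, pb (h i)}"
        and y: "y \<in> {pa (h j), h j, pb (h j)}"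
      show "x \<noteq> y \<and> \<not> adj G x y"
      proof (rule cross_ok[OF hJ(2)[OF ij(1)] hJ(2)[OF ij(2)] hne(1)[OF ij] _ _ _ _ hne(2)[OF ij] _ x y])
        show "d (h i) = d (h j)" using lv hJ ij by metis
        show "\<not> adj G (h i) (h j)" using ind hJ ij by blast
        show "\<not> adj G (pa (h i)) (h j)" using cf hJ ij hne by metis
        show "\<not> adj G (pa (h j)) (h i)" using cf hJ ij hne by metis
        show "\<not> adj G (pa (h i)) (pa (h j))"
          using ic hJ(3)[OF ij(1)] hJ(3)[OF ij(2)] hne(2)[OF ij] unfolding indep_def adj_def by blast
      qed
    qed
    then show ?thesis by simp
  qed
qed

end

context rooted
begin

lemma rooted_main:
  assumes n: "0 < n"
    and RP1: "\<And>(X::'a set) E. finite X \<Longrightarrow> R1 \<le> card X \<Longrightarrow> \<exists>Y\<subseteq>X. card Y = n \<and> (clique Y E \<or> indep Y E)"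
    and RP2: "\<And>(X::'a set) E. finite X \<Longrightarrow> R2 \<le> card X \<Longrightarrow> \<exists>Y\<subseteq>X. card Y = m \<and> (clique Y E \<or> indep Y E)"
    and m: "n \<le> m" "R1 * (2*n-1) \<le> m" and R2: "1 \<le> R2"
    and T: "T \<subseteq> Sr" "finite T" "4*n*R2 \<le> card T"
  shows "Kn_star n \<prec> G \<or> nP3 n \<prec> G \<or> K1n_star n \<prec> G"
proof (cases "4*n \<le> card (d ` T)")
  case True
  obtain Ls where Ls: "Ls \<subseteq> d ` T" "finite Ls" "card Ls = n" "\<forall>x\<in>Ls. \<forall>y\<in>Ls. x \<noteq> y \<longrightarrow> x + 4 \<le> y \<or> y + 4 \<le> x"
    using sep_subset[of "d ` T" n] True T(2) by auto
  define ch where "ch l = (SOME s. s \<in> T \<and> d s = l)" for l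
  have ch: "ch l \<in> T \<and> d (ch l) = l" if "l \<in> Ls" for l
  proof -
    have "\<exists>s. s \<in> T \<and> d s = l" using that Ls(1) by auto
    then show ?thesis unfolding ch_def by (rule someI_ex)
  qed
  have inj: "inj_on ch Ls" by (rule inj_onI) (metis ch)
  have "nP3 n \<prec> G"
  proof (rule L1[where Y="ch ` Ls"])
    show "ch ` Ls \<subseteq> Sr" using ch T(1) by auto
    show "finite (ch ` Ls)" using Ls(2) by simp
    show "card (ch ` Ls) = n" using card_image[OF inj] Ls(3) by simp
    show "\<forall>s\<in>ch ` Ls. \<forall>t\<in>ch ` Ls. s \<noteq> t \<longrightarrow> d s + 4 \<le> d t \<or> d t + 4 \<le> d s"
    proof (intro ballI impI)
      fix s t assume "s \<in> ch ` Ls" "t \<in> ch ` Ls" "s \<noteq> t"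
      then obtain l l' where "l \<in> Ls" "l' \<in> Ls" "s = ch l" "t = ch l'" "l \<noteq> l'" by blast
      then show "d s + 4 \<le> d t \<or> d t + 4 \<le> d s" using ch Ls(4) by metis
    qed
  qed
  then show ?thesis by simp
next
  case False
  have "\<exists>L\<in>d ` T. R2 \<le> card {s\<in>T. d s = L}"
  proof (rule ccontr)
    assume "\<not> ?thesis"
    then have "\<forall>L\<in>d ` T. card {s\<in>T. d s = L} \<le> R2 - 1" by auto
    then have "card T \<le> card (d ` T) * (R2 - 1)" by (rule pigeon[OF T(2)])
    also have "\<dots> \<le> 4*n*(R2-1)" using False by simp
    also have "\<dots> < 4*n*R2" using n R2 by simp
    finally show False using T(3) by simp
  qed
  then obtain L where AL: "R2 \<le> card {s\<in>T. d s = L}" by blast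
  define A where "A = {s\<in>T. d s = L}"
  have fA: "finite A" using T(2) A_def by simp
  have AS: "A \<subseteq> Sr" using T(1) A_def by auto
  have Ad: "\<forall>s\<in>A. d s = L" using A_def by simp
  obtain Z where Z: "Z \<subseteq> A" "card Z = m" "clique Z (edges G) \<or> indep Z (edges G)"
    using RP2[OF fA] AL A_def by blast
  have fZ: "finite Z" using fA Z(1) finite_subset by blast
  from Z(3) show ?thesis
  proof
    assume cl: "clique Z (edges G)"
    obtain K where K: "K \<subseteq> Z" "card K = n" "finite K" using obtain_subset_with_card_n[of n Z] Z(2) m(1) by metis
    have "Kn_star n \<prec> G"
    proof (rule L2[where K=K])
      show "K \<subseteq> Sr" using K(1) Z(1) AS by auto
      show "finite K" "card K = n" using K by auto
      show "\<forall>s\<in>K. \<forall>t\<in>K. d s = d t" using K(1) Z(1) Ad by (metis subsetD)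
      show "\<forall>s\<in>K. \<forall>t\<in>K. s \<noteq> t \<longrightarrow> adj G s t" using K(1) cl unfolding clique_def adj_def by blast
    qed
    then show ?thesis by simp
  next
    assume ic: "indep Z (edges G)"
    have ZS: "Z \<subseteq> Sr" using Z(1) AS by auto
    have Zd: "\<forall>s\<in>Z. d s = L" using Z(1) Ad by auto
    have Zi: "\<forall>s\<in>Z. \<forall>t\<in>Z. \<not> adj G s t"
    proof (intro ballI)
      fix s t assume "s \<in> Z" "t \<in> Z"
      then show "\<not> adj G s t" using ic adj_irrefl[of s] unfolding indep_def adj_def by (cases "s = t") auto
    qed
    show ?thesis
    proof (cases "\<exists>s\<in>Z. n \<le> card {t\<in>Z. adj G (pa s) t}")
      case True
      then obtain s where s: "s \<in> Z" "n \<le> card {t\<in>Z. adj G (pa s) t}" by blast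
      obtain Y where Y: "Y \<subseteq> {t\<in>Z. adj G (pa s) t}" "card Y = n" "finite Y"
        using obtain_subset_with_card_n[OF s(2)] by metis
      have "K1n_star n \<prec> G"
      proof (rule L3[where Y=Y and L=L and c="pa s"])
        show "Y \<subseteq> Sr" using Y(1) ZS by auto
        show "finite Y" "card Y = n" using Y by auto
        show "\<forall>s\<in>Y. d s = L" using Y(1) Zd by auto
        show "\<forall>s\<in>Y. \<forall>t\<in>Y. \<not> adj G s t" using Y(1) Zi by auto
        show "conn r (pa s)" using pa ZS s(1) by blast
        show "Suc (d (pa s)) = L" using pa ZS s(1) Zd by auto
        show "\<forall>t\<in>Y. adj G (pa s) t" using Y(1) by auto
      qed
      then show ?thesis by simp
    next
      case False
      then have deg: "\<forall>s\<in>Z. card {t\<in>Z. adj G (pa s) t} \<le> n - 1" by auto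
      obtain J where J: "J \<subseteq> Z" "card Z \<le> card J * (2*(n-1)+1)" "\<forall>x\<in>J. \<forall>y\<in>J. x \<noteq> y \<longrightarrow> \<not> adj G (pa x) y"
        using indep_select[OF fZ deg] by blast
      have e: "2*(n-1)+1 = 2*n-1" using n by simp
      have c1: "card Z \<le> card J * (2*n-1)" using J(2) unfolding e .
      have c2: "R1 * (2*n-1) \<le> card J * (2*n-1)" using c1 Z(2) m(2) by linarith
      have "0 < 2*n-1" using n by simp
      then have RJ: "R1 \<le> card J" using c2 mult_le_cancel2 by blast
      have "Kn_star n \<prec> G \<or> nP3 n \<prec> G"
      proof (rule L4[where J=J and L=L and R=R1])
        show "J \<subseteq> Sr" using J(1) ZS by auto
        show "finite J" using J(1) fZ finite_subset by blast
        show "\<forall>s\<in>J. d s = L" using J(1) Zd by auto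
        show "\<forall>s\<in>J. \<forall>t\<in>J. \<not> adj G s t" using J(1) Zi by auto
        show "\<forall>s\<in>J. \<forall>t\<in>J. s \<noteq> t \<longrightarrow> \<not> adj G (pa s) t" using J(3) by blast
        show "R1 \<le> card J" by (rule RJ)
        show "\<And>(X::'a set) E. finite X \<Longrightarrow> R1 \<le> card X \<Longrightarrow> \<exists>Y\<subseteq>X. card Y = n \<and> (clique Y E \<or> indep Y E)"
          by (rule RP1)
      qed
      then show ?thesis by blast
    qed
  qed
qed

end

lemma isub_trans:
  assumes "induced_sub H1 H2" "induced_sub H2 G" shows "induced_sub H1 G"
proof -
  obtain f where f: "inj_on f (verts H1)" "f ` verts H1 \<subseteq> verts H2"
    "\<forall>u\<in>verts H1. \<forall>v\<in>verts H1. {u, v} \<in> edges H1 \<longleftrightarrow> {f u, f v} \<in> edges H2"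
    using assms(1) unfolding induced_sub_def by blast
  obtain g where g: "inj_on g (verts H2)" "g ` verts H2 \<subseteq> verts G"
    "\<forall>u\<in>verts H2. \<forall>v\<in>verts H2. {u, v} \<in> edges H2 \<longleftrightarrow> {g u, g v} \<in> edges G"
    using assms(2) unfolding induced_sub_def by blast
  show ?thesis unfolding induced_sub_def
  proof (intro exI[of _ "g \<circ> f"] conjI ballI)
    show "inj_on (g \<circ> f) (verts H1)" by (rule comp_inj_on[OF f(1) inj_on_subset[OF g(1) f(2)]])
    show "(g \<circ> f) ` verts H1 \<subseteq> verts G" using f(2) g(2) by auto
    fix u v assume uv: "u \<in> verts H1" "v \<in> verts H1"
    then have "f u \<in> verts H2" "f v \<in> verts H2" using f(2) by auto
    then show "{u, v} \<in> edges H1 \<longleftrightarrow> {(g \<circ> f) u, (g \<circ> f) v} \<in> edges G"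
    proof -
      have "{u, v} \<in> edges H1 \<longleftrightarrow> {f u, f v} \<in> edges H2" using f(3) uv by blast
      also have "\<dots> \<longleftrightarrow> {g (f u), g (f v)} \<in> edges G" using g(3) \<open>f u \<in> verts H2\<close> \<open>f v \<in> verts H2\<close> by blast
      finally show ?thesis by simp
    qed
  qed
qed

context wfg
begin

lemma comps_main:
  assumes n: "0 < n"
    and RP1: "\<And>(X::'a set) E. finite X \<Longrightarrow> R1 \<le> card X \<Longrightarrow> \<exists>Y\<subseteq>X. card Y = n \<and> (clique Y E \<or> indep Y E)"
    and RP2: "\<And>(X::'a set) E. finite X \<Longrightarrow> R2 \<le> card X \<Longrightarrow> \<exists>Y\<subseteq>X. card Y = m \<and> (clique Y E \<or> indep Y E)"
    and m: "n \<le> m" "R1 * (2*n-1) \<le> m" and R2: "1 \<le> R2"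
    and big: "n * (4*n*R2 + 1) \<le> card {v \<in> verts G. sdeg G v \<ge> 2}"
  shows "Kn_star n \<prec> G \<or> nP3 n \<prec> G \<or> K1n_star n \<prec> G"
proof -
  define S where "S = {v \<in> verts G. sdeg G v \<ge> 2}"
  have fS: "finite S" using finV S_def by simp
  show ?thesis
  proof (cases "n \<le> card (cls G ` S)")
    case True
    obtain Q where Q: "Q \<subseteq> cls G ` S" "card Q = n" "finite Q"
      using obtain_subset_with_card_n[OF True] by metis
    define rep where "rep C = (SOME v. v \<in> S \<and> cls G v = C)" for C
    have rep: "rep C \<in> S \<and> cls G (rep C) = C" if "C \<in> Q" for C
    proof -
      have "\<exists>v. v \<in> S \<and> cls G v = C" using that Q(1) by auto
      then show ?thesis unfolding rep_def by (rule someI_ex)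
    qed
    have injr: "inj_on rep Q" by (rule inj_onI) (metis rep)
    define Y where "Y = rep ` Q"
    have YS: "Y \<subseteq> S" using rep Y_def by auto
    have cY: "card Y = n" using card_image[OF injr] Q(2) Y_def by simp
    have fY: "finite Y" using Q(3) Y_def by simp
    have Ycls: "cls G s \<noteq> cls G t" if st: "s \<in> Y" "t \<in> Y" "s \<noteq> t" for s t
    proof -
      obtain C where C: "C \<in> Q" "s = rep C" using st(1) Y_def by blast
      obtain C' where C': "C' \<in> Q" "t = rep C'" using st(2) Y_def by blast
      have "C \<noteq> C'" using C C' st(3) by blast
      then show ?thesis using rep[OF C(1)] rep[OF C'(1)] C(2) C'(2) by simp
    qed
    define z where "z s = (SOME p. adj G s (fst p) \<and> adj G s (snd p) \<and> \<not> connS s (fst p) (snd p))" for s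
    have zp: "adj G s (fst (z s)) \<and> adj G s (snd (z s)) \<and> \<not> connS s (fst (z s)) (snd (z s))" if sS: "s \<in> S" for s
    proof -
      have "2 \<le> sdeg G s" using sS S_def by simp
      then obtain a b where "adj G s a" "adj G s b" "\<not> connS s a b" using cut_nbrs by blast
      then have "\<exists>p. adj G s (fst p) \<and> adj G s (snd p) \<and> \<not> connS s (fst p) (snd p)"
        by (intro exI[of _ "(a,b)"]) simp
      then show ?thesis unfolding z_def by (rule someI_ex)
    qed
    obtain h where hY: "\<And>i. i<n \<Longrightarrow> h i \<in> Y" and hi: "\<And>i j. i<n \<Longrightarrow> j<n \<Longrightarrow> h i = h j \<Longrightarrow> i = j"
      using enum[OF fY cY] by blast
    have hS: "h i \<in> S" if "i < n" for i using hY[OF that] YS by blast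
    have tconn: "conn (h i) x" if "i < n" "x \<in> {snd (z (h i)), h i, fst (z (h i))}" for i x
    proof -
      have zz: "adj G (h i) (fst (z (h i)))" "adj G (h i) (snd (z (h i)))" using zp[OF hS[OF that(1)]] by auto
      have "x = snd (z (h i)) \<or> x = h i \<or> x = fst (z (h i))" using that(2) by simp
      then show ?thesis
      proof (elim disjE)
        assume "x = snd (z (h i))" then show ?thesis using zz(2) by (simp add: r_into_rtranclp)
      next
        assume "x = h i" then show ?thesis by simp
      next
        assume "x = fst (z (h i))" then show ?thesis using zz(1) by (simp add: r_into_rtranclp)
      qed
    qed
    have "nP3 n \<prec> G"
    proof (rule emb_nP3[of n "\<lambda>i. snd (z (h i))" h "\<lambda>i. fst (z (h i))"])
      fix i assume i: "i < n"
      let ?s = "h i" and ?a = "fst (z (h i))" and ?b = "snd (z (h i))"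
      have zz: "adj G ?s ?a" "adj G ?s ?b" "\<not> connS ?s ?a ?b" using zp[OF hS[OF i]] by auto
      have "\<not> adj G ?b ?a"
      proof
        assume "adj G ?b ?a"
        moreover have "?a \<noteq> ?s" using adjD[OF zz(1)] by auto
        moreover have "?b \<noteq> ?s" using adjD[OF zz(2)] by auto
        ultimately have "adj (delete_vertex G ?s) ?b ?a" by (simp add: adj_del)
        then have "connS ?s ?b ?a" by (rule r_into_rtranclp)
        then show False using zz(3) connS_sym by blast
      qed
      moreover have "?b \<noteq> ?a" using zz(3) by auto
      moreover have "adj G ?b ?s" using zz(2) adj_sym[of G ?b ?s] by simp
      ultimately show "adj G ?b ?s \<and> adj G ?s ?a \<and> \<not> adj G ?b ?a \<and> ?b \<noteq> ?a"
        using zz(1) by simp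
    next
      fix i j x y assume ij: "i < n" "j < n" "i \<noteq> j"
        and x: "x \<in> {snd (z (h i)), h i, fst (z (h i))}" and y: "y \<in> {snd (z (h j)), h j, fst (z (h j))}"
      have "h i \<noteq> h j" using hi ij by blast
      then have ne: "cls G (h i) \<noteq> cls G (h j)" using Ycls[OF hY[OF ij(1)] hY[OF ij(2)]] by blast
      have cx: "conn (h i) x" and cy: "conn (h j) y" using tconn ij x y by auto
      show "x \<noteq> y \<and> \<not> adj G x y"
      proof
        show "x \<noteq> y"
        proof
          assume "x = y"
          then have "conn y (h j)" using cy conn_sym by blast
          then have "conn (h i) (h j)" using cx \<open>x = y\<close> rtranclp_trans[of "adj G" "h i" y "h j"] by simp
          then show False using ne cls_conn_eq by blast
        qed
        show "\<not> adj G x y"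
        proof
          assume "adj G x y"
          then have "conn (h i) y" using cx conn_step by blast
          moreover have "conn y (h j)" using cy conn_sym by blast
          ultimately have "conn (h i) (h j)" using rtranclp_trans[of "adj G" "h i" y "h j"] by simp
          then show False using ne cls_conn_eq by blast
        qed
      qed
    qed
    then show ?thesis by simp
  next
    case False
    have "\<exists>C\<in>cls G ` S. 4*n*R2 + 1 \<le> card {v\<in>S. cls G v = C}"
    proof (rule ccontr)
      assume "\<not> ?thesis"
      then have "\<forall>C\<in>cls G ` S. card {v\<in>S. cls G v = C} \<le> 4*n*R2" by auto
      then have "card S \<le> card (cls G ` S) * (4*n*R2)" by (rule pigeon[OF fS])
      also have "\<dots> \<le> (n-1) * (4*n*R2)"
        by (rule mult_le_mono1) (use False in linarith)
      also have "\<dots> \<le> n * (4*n*R2)" by simp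
      also have "\<dots> < n * (4*n*R2 + 1)" using n by simp
      finally show False using big S_def by simp
    qed
    then obtain C where C: "C \<in> cls G ` S" "4*n*R2+1 \<le> card {v\<in>S. cls G v = C}" by blast
    then obtain r0 where r0: "r0 \<in> S" "cls G r0 = C" by auto
    define T where "T = {v\<in>S. cls G v = C} - {r0}"
    have fT: "finite T" using fS T_def by simp
    have "card T = card {v\<in>S. cls G v = C} - 1" unfolding T_def
      by (rule card_Diff_singleton) (use r0 in auto)
    then have cT: "4*n*R2 \<le> card T" using C(2) by simp
    interpret rt: rooted G r0 using wf r0(1) S_def by unfold_locales auto
    have TS: "T \<subseteq> rt.Sr"
    proof
      fix v assume v: "v \<in> T"
      then have vS: "v \<in> S" "cls G v = cls G r0" "v \<noteq> r0" using T_def r0 by auto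
      then have "conn r0 v" using cls_eq_conn r0(1) S_def by auto
      then show "v \<in> rt.Sr" using vS S_def rt.Sr_def by auto
    qed
    show ?thesis by (rule rt.rooted_main[OF n RP1 RP2 m R2 TS fT cT])
  qed
qed

end

lemma isolated_reach:
  assumes "\<forall>w. \<not> adj (delete_vertex G v) x w" "(adj (delete_vertex G v))\<^sup>*\<^sup>* x y"
  shows "y = x"
  using assms(2)
proof (cases rule: converse_rtranclpE)
  case base then show ?thesis by simp
next
  case (step z) then show ?thesis using assms(1) by metis
qed

context wfg
begin

lemma sdeg_pendant:
  assumes "x \<in> verts G" "y \<in> verts G" "x \<noteq> v" "y \<noteq> v" "x \<noteq> y" "conn x y"
    and "\<And>w. adj G x w \<Longrightarrow> w = v"
  shows "sdeg G v \<ge> 2"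
proof (rule sdeg_of_split[of x v y])
  show "\<not> connS v x y"
  proof
    assume "connS v x y"
    moreover have "\<forall>w. \<not> adj (delete_vertex G v) x w"
    proof
      fix w show "\<not> adj (delete_vertex G v) x w" using assms(7)[of w] by (auto simp add: adj_del)
    qed
    ultimately have "y = x" using isolated_reach by metis
    then show False using assms(5) by simp
  qed
  show "x \<in> verts G - {v}" "y \<in> verts G - {v}" using assms(1-4) by auto
  show "conn x y" by (rule assms(6))
qed

end

lemma wf_Kn: "wf_graph (Kn_star n)"
  unfolding wf_graph_def
proof (intro conjI ballI)
  show "finite (verts (Kn_star n))" by (simp add: Kn_star_def verts_def)
  fix e assume "e \<in> edges (Kn_star n)"
  then have "(\<exists>i j. e = {i,j} \<and> i<n \<and> j<n \<and> i\<noteq>j) \<or> (\<exists>i. e = {i, n+i} \<and> i<n)"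
    by (simp add: Kn_star_def edges_def)
  then show "\<exists>u v. u \<noteq> v \<and> e = {u,v} \<and> u \<in> verts (Kn_star n) \<and> v \<in> verts (Kn_star n)"
  proof (elim disjE exE conjE)
    fix i j assume "e = {i,j}" "i<n" "j<n" "i\<noteq>j"
    then show ?thesis by (intro exI[of _ i] exI[of _ j]) (simp add: Kn_star_def verts_def)
  next
    fix i assume "e = {i,n+i}" "i<n"
    then show ?thesis by (intro exI[of _ i] exI[of _ "n+i"]) (simp add: Kn_star_def verts_def)
  qed
qed

lemma wf_nP3: "wf_graph (nP3 n)"
  unfolding wf_graph_def
proof (intro conjI ballI)
  show "finite (verts (nP3 n))" by (simp add: nP3_def verts_def)
  fix e assume "e \<in> edges (nP3 n)"
  then have "(\<exists>i. e = {3*i, 3*i+1} \<and> i<n) \<or> (\<exists>i. e = {3*i+1, 3*i+2} \<and> i<n)"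
    by (simp add: nP3_def edges_def)
  then show "\<exists>u v. u \<noteq> v \<and> e = {u,v} \<and> u \<in> verts (nP3 n) \<and> v \<in> verts (nP3 n)"
  proof (elim disjE exE conjE)
    fix i assume "e = {3*i, 3*i+1}" "i<n"
    then show ?thesis by (intro exI[of _ "3*i"] exI[of _ "3*i+1"]) (simp add: nP3_def verts_def)
  next
    fix i assume "e = {3*i+1, 3*i+2}" "i<n"
    then show ?thesis by (intro exI[of _ "3*i+1"] exI[of _ "3*i+2"]) (simp add: nP3_def verts_def)
  qed
qed

lemma wf_K1n: "wf_graph (K1n_star n)"
  unfolding wf_graph_def
proof (intro conjI ballI)
  show "finite (verts (K1n_star n))" by (simp add: K1n_star_def verts_def)
  fix e assume "e \<in> edges (K1n_star n)"
  then have "(\<exists>i. e = {0, i} \<and> 1 \<le> i \<and> i \<le> n) \<or> (\<exists>i. e = {i, n+i} \<and> 1 \<le> i \<and> i \<le> n)"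
    by (simp add: K1n_star_def edges_def)
  then show "\<exists>u v. u \<noteq> v \<and> e = {u,v} \<and> u \<in> verts (K1n_star n) \<and> v \<in> verts (K1n_star n)"
  proof (elim disjE exE conjE)
    fix i assume "e = {0, i}" "1 \<le> i" "i \<le> n"
    then show ?thesis by (intro exI[of _ 0] exI[of _ i]) (simp add: K1n_star_def verts_def)
  next
    fix i assume "e = {i, n+i}" "1 \<le> i" "i \<le> n"
    then show ?thesis by (intro exI[of _ i] exI[of _ "n+i"]) (simp add: K1n_star_def verts_def)
  qed
qed

lemma cnt_Kn:
  assumes "2 \<le> n"
  shows "n \<le> card {v \<in> verts (Kn_star n). sdeg (Kn_star n) v \<ge> 2}"
proof -
  interpret w: wfg "Kn_star n" by unfold_locales (rule wf_Kn)
  have V: "verts (Kn_star n) = {0..<2*n}" by (simp add: Kn_star_def verts_def)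
  have ad: "adj (Kn_star n) u v \<longleftrightarrow> (u < n \<and> v < n \<and> u \<noteq> v) \<or> (u < n \<and> v = n + u) \<or> (v < n \<and> u = n + v)"
    if "u < 2*n" "v < 2*n" for u v
    unfolding adj_def by (rule w.Kn_edge[OF that])
  have "{0..<n} \<subseteq> {v \<in> verts (Kn_star n). sdeg (Kn_star n) v \<ge> 2}"
  proof
    fix i assume i: "i \<in> {0..<n}"
    then have i': "i < n" by simp
    define y where "y = (if i = 0 then 1 else 0::nat)"
    have y: "y < n" "y \<noteq> i" using assms i' y_def by auto
    have "sdeg (Kn_star n) i \<ge> 2"
    proof (rule w.sdeg_pendant[of "n+i" y])
      show "n + i \<in> verts (Kn_star n)" "y \<in> verts (Kn_star n)" using V i' y by auto
      show "n + i \<noteq> i" "y \<noteq> i" "n + i \<noteq> y" using assms y by auto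
      have "adj (Kn_star n) (n+i) i" using ad[of "n+i" i] i' by simp
      moreover have "adj (Kn_star n) i y" using ad[of i y] i' y by simp
      ultimately show "(adj (Kn_star n))\<^sup>*\<^sup>* (n + i) y" by (meson r_into_rtranclp rtranclp.rtrancl_into_rtrancl)
      fix w assume a: "adj (Kn_star n) (n + i) w"
      then have "w < 2*n" using w.adjD V by auto
      then show "w = i" using a ad[of "n+i" w] i' by simp
    qed
    then show "i \<in> {v \<in> verts (Kn_star n). sdeg (Kn_star n) v \<ge> 2}" using V i' by auto
  qed
  then have "card {0..<n} \<le> card {v \<in> verts (Kn_star n). sdeg (Kn_star n) v \<ge> 2}"
    by (rule card_mono[rotated]) (use w.finV in simp)
  then show ?thesis by simp
qed

lemma cnt_nP3:
  shows "n \<le> card {v \<in> verts (nP3 n). sdeg (nP3 n) v \<ge> 2}"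
proof -
  interpret w: wfg "nP3 n" by unfold_locales (rule wf_nP3)
  have V: "verts (nP3 n) = {0..<3*n}" by (simp add: nP3_def verts_def)
  have "(\<lambda>i. 3*i+1) ` {..<n} \<subseteq> {v \<in> verts (nP3 n). sdeg (nP3 n) v \<ge> 2}"
  proof
    fix v assume "v \<in> (\<lambda>i. 3*i+1) ` {..<n}"
    then obtain i where i: "i < n" "v = 3*i+1" by auto
    have e01: "adj (nP3 n) (3*i+0) (3*i+1)" using w.nP3_edge3[of 0 1 i i n] i unfolding adj_def by simp
    have e12: "adj (nP3 n) (3*i+1) (3*i+2)" using w.nP3_edge3[of 1 2 i i n] i unfolding adj_def
      by (simp add: insert_commute)
    have "sdeg (nP3 n) (3*i+1) \<ge> 2"
    proof (rule w.sdeg_pendant[of "3*i+0" "3*i+2"])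
      show "3*i+0 \<in> verts (nP3 n)" "3*i+2 \<in> verts (nP3 n)" using V i by auto
      show "3*i+0 \<noteq> 3*i+1" "3*i+2 \<noteq> 3*i+1" "3*i+0 \<noteq> 3*i+2" by auto
      show "(adj (nP3 n))\<^sup>*\<^sup>* (3*i+0) (3*i+2)" using e01 e12
        by (meson r_into_rtranclp rtranclp.rtrancl_into_rtrancl)
      fix w assume a: "adj (nP3 n) (3*i+0) w"
      then have "w < 3*n" using w.adjD V by auto
      have wd: "w = 3*(w div 3) + w mod 3" by simp
      have "w mod 3 < 3" by simp
      then have "w div 3 = i \<and> ({0, w mod 3} = {0::nat,1} \<or> {0, w mod 3} = {1::nat,2})"
        using a w.nP3_edge3[of 0 "w mod 3" i "w div 3" n] wd unfolding adj_def by (metis zero_less_numeral)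
      then have "w div 3 = i" "w mod 3 = 1" by (auto simp: doubleton_eq_iff)
      then show "w = 3*i+1" using wd by simp
    qed
    then show "v \<in> {v \<in> verts (nP3 n). sdeg (nP3 n) v \<ge> 2}" using V i by auto
  qed
  then have "card ((\<lambda>i. 3*i+1) ` {..<n}) \<le> card {v \<in> verts (nP3 n). sdeg (nP3 n) v \<ge> 2}"
    by (rule card_mono[rotated]) (use w.finV in simp)
  moreover have "card ((\<lambda>i. 3*i+1) ` {..<n}) = n" by (subst card_image) (auto simp: inj_on_def)
  ultimately show ?thesis by simp
qed

lemma cnt_K1n:
  shows "n \<le> card {v \<in> verts (K1n_star n). sdeg (K1n_star n) v \<ge> 2}"
proof -
  interpret w: wfg "K1n_star n" by unfold_locales (rule wf_K1n)
  have V: "verts (K1n_star n) = {0..2*n}" by (simp add: K1n_star_def verts_def)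
  have ad: "adj (K1n_star n) u v \<longleftrightarrow> (u = 0 \<and> 1 \<le> v \<and> v \<le> n) \<or> (v = 0 \<and> 1 \<le> u \<and> u \<le> n) \<or> (1 \<le> u \<and> u \<le> n \<and> v = n + u) \<or> (1 \<le> v \<and> v \<le> n \<and> u = n + v)"
    if "u \<le> 2*n" "v \<le> 2*n" for u v
    unfolding adj_def by (rule w.K1n_edge[OF that])
  have "{1..n} \<subseteq> {v \<in> verts (K1n_star n). sdeg (K1n_star n) v \<ge> 2}"
  proof
    fix i assume i: "i \<in> {1..n}"
    then have i': "1 \<le> i" "i \<le> n" by auto
    have "sdeg (K1n_star n) i \<ge> 2"
    proof (rule w.sdeg_pendant[of "n+i" 0])
      show "n + i \<in> verts (K1n_star n)" "0 \<in> verts (K1n_star n)" using V i' by auto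
      show "n + i \<noteq> i" "0 \<noteq> i" "n + i \<noteq> 0" using i' by auto
      have "adj (K1n_star n) (n+i) i" using ad[of "n+i" i] i' by simp
      moreover have "adj (K1n_star n) i 0" using ad[of i 0] i' by simp
      ultimately show "(adj (K1n_star n))\<^sup>*\<^sup>* (n + i) 0" by (meson r_into_rtranclp rtranclp.rtrancl_into_rtrancl)
      fix w assume a: "adj (K1n_star n) (n + i) w"
      then have "w \<le> 2*n" using w.adjD V by auto
      then show "w = i" using a ad[of "n+i" w] i' by simp
    qed
    then show "i \<in> {v \<in> verts (K1n_star n). sdeg (K1n_star n) v \<ge> 2}" using V i' by auto
  qed
  then have "card {1..n} \<le> card {v \<in> verts (K1n_star n). sdeg (K1n_star n) v \<ge> 2}"
    by (rule card_mono[rotated]) (use w.finV in simp)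
  then show ?thesis by simp
qed

lemma ramsey_nat:
  "\<exists>R\<ge>1. \<forall>(X::nat set) E. finite X \<longrightarrow> R \<le> card X \<longrightarrow> (\<exists>Y\<subseteq>X. card Y = p \<and> (clique Y E \<or> indep Y E))"
proof -
  obtain R where R: "R \<ge> 1" "\<forall>(X::nat set) (E::nat set set). finite X \<and> card X \<ge> R \<longrightarrow>
      (\<exists>Y \<subseteq> X. card Y = p \<and> clique Y E \<or> card Y = p \<and> indep Y E)"
    using ramsey2[where m=p and n=p] by blast
  show ?thesis
  proof (intro exI[of _ R] conjI allI impI)
    show "1 \<le> R" by (rule R(1))
    fix X :: "nat set" and E assume "finite X" "R \<le> card X"
    then show "\<exists>Y\<subseteq>X. card Y = p \<and> (clique Y E \<or> indep Y E)" using R(2) by blast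
  qed
qed

theorem corollary1p11:
  fixes \<H> :: "nat graph set"
  assumes "\<forall>H\<in>\<H>. wf_graph H"
  shows "(\<exists>c::nat. \<forall>G::nat graph. wf_graph G \<and> H_free \<H> G \<longrightarrow>
             card {v \<in> verts G. sdeg G v \<ge> 2} < c)
         \<longleftrightarrow> (\<exists>n::nat. n > 0 \<and> family_le \<H> {Kn_star n, nP3 n, K1n_star n})"
proof
  assume "\<exists>c::nat. \<forall>G::nat graph. wf_graph G \<and> H_free \<H> G \<longrightarrow> card {v \<in> verts G. sdeg G v \<ge> 2} < c"
  then obtain c where c: "\<And>G::nat graph. wf_graph G \<Longrightarrow> H_free \<H> G \<Longrightarrow> card {v \<in> verts G. sdeg G v \<ge> 2} < c"
    by blast
  show "\<exists>n::nat. n > 0 \<and> family_le \<H> {Kn_star n, nP3 n, K1n_star n}"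
  proof (rule ccontr)
    assume neg: "\<not> ?thesis"
    define n where "n = max c 2"
    have n2: "2 \<le> n" "c \<le> n" using n_def by auto
    have "0 < n" using n2(1) by simp
    then have "\<not> family_le \<H> {Kn_star n, nP3 n, K1n_star n}" using neg by blast
    then obtain H2 where H2: "H2 \<in> {Kn_star n, nP3 n, K1n_star n}" "\<forall>H1\<in>\<H>. \<not> induced_sub H1 H2"
      unfolding family_le_def by blast
    have hf: "H_free \<H> H2" using H2(2) unfolding H_free_def by blast
    have wf2: "wf_graph H2" using H2(1) wf_Kn wf_nP3 wf_K1n by blast
    have cnt: "n \<le> card {v \<in> verts H2. sdeg H2 v \<ge> 2}" using H2(1) cnt_Kn[OF n2(1)] cnt_nP3 cnt_K1n by blast
    have "card {v \<in> verts H2. sdeg H2 v \<ge> 2} < c" by (rule c[OF wf2 hf])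
    then show False using cnt n2 by simp
  qed
next
  assume "\<exists>n::nat. n > 0 \<and> family_le \<H> {Kn_star n, nP3 n, K1n_star n}"
  then obtain n where n: "0 < n" and fl: "family_le \<H> {Kn_star n, nP3 n, K1n_star n}" by blast
  obtain R1 where R1: "\<And>(X::nat set) E. finite X \<Longrightarrow> R1 \<le> card X \<Longrightarrow> \<exists>Y\<subseteq>X. card Y = n \<and> (clique Y E \<or> indep Y E)"
    using ramsey_nat[of n] by blast
  define m where "m = max n (R1 * (2*n-1))"
  obtain R2 where R2: "1 \<le> R2" "\<And>(X::nat set) E. finite X \<Longrightarrow> R2 \<le> card X \<Longrightarrow> \<exists>Y\<subseteq>X. card Y = m \<and> (clique Y E \<or> indep Y E)"
    using ramsey_nat[of m] by blast
  have m: "n \<le> m" "R1 * (2*n-1) \<le> m" using m_def by auto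
  show "\<exists>c::nat. \<forall>G::nat graph. wf_graph G \<and> H_free \<H> G \<longrightarrow> card {v \<in> verts G. sdeg G v \<ge> 2} < c"
  proof (intro exI[of _ "n * (4*n*R2 + 1)"] allI impI)
    fix G :: "nat graph" assume G: "wf_graph G \<and> H_free \<H> G"
    interpret w: wfg G using G by unfold_locales blast
    show "card {v \<in> verts G. sdeg G v \<ge> 2} < n * (4*n*R2 + 1)"
    proof (rule ccontr)
      assume "\<not> ?thesis"
      then have big: "n * (4*n*R2 + 1) \<le> card {v \<in> verts G. sdeg G v \<ge> 2}" by simp
      have "induced_sub (Kn_star n) G \<or> induced_sub (nP3 n) G \<or> induced_sub (K1n_star n) G"
        by (rule w.comps_main[OF n R1 R2(2) m R2(1) big])
      then obtain X where X: "X \<in> {Kn_star n, nP3 n, K1n_star n}" "induced_sub X G" by blast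
      then obtain H1 where H1: "H1 \<in> \<H>" "induced_sub H1 X" using fl unfolding family_le_def by blast
      have "induced_sub H1 G" by (rule isub_trans[OF H1(2) X(2)])
      then show False using G H1(1) unfolding H_free_def by blast
    qed
  qed
qed

end
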